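(* Let $C$ be a conformal algebra, $t(b_1,\dots,b_n)$ a non-associative monomial obtained from $b_1\cdots b_n$ by a bracketing, $\sigma\in S_n$, $x_1,\dots,x_{n-1}\in\Bbbk[t]$, $y\in\Bbbk[t,t^{-1}]$ and $a_1,\dots,a_n\in C$. Define, for $i=1,\dots,n$, $\zeta_i=x_{i\sigma\,(2)}$ if $i\sigma\neq n$ and $\zeta_i=y\,S(x_{1(1)}\cdots x_{n-1(1)})$ if $i\sigma=n$ (Sweedler summation over the components of $\Delta(x_1),\dots,\Delta(x_{n-1})$ understood). Then $$P^{x_1\otimes\cdots\otimes x_{n-1}}_y\big((\sigma\otimes_H\mathrm{id}_C)\,t^*(a_{1\sigma},\dots,a_{n\sigma})\big)=t\big(a_{1\sigma}(\zeta_1),\dots,a_{n\sigma}(\zeta_n)\big).$$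
   Context: $\Bbbk$ is a field of characteristic $0$, $H=\Bbbk[D]$ with Hopf structure $\Delta(D)=D\otimes1+1\otimes D$, $\varepsilon(D)=0$, $S(D)=-D$; iterated coproduct $\Delta^{(1)}=\mathrm{id}$, $\Delta^{(k+1)}=(\mathrm{id}\otimes\Delta^{(k)})\Delta$; $H$ acts on $H^{\otimes n}$ from the right by $(f_1\otimes\cdots\otimes f_n)h=f_1h_{(1)}\otimes\cdots\otimes f_nh_{(n)}$ and $H^{\otimes n}\otimes_H M$ is taken w.r.t. this action. A conformal algebra is a unital left $H$-module $C$ with bilinear operations $a_{(n)}b$ ($n\ge0$) such that $a_{(n)}b=0$ for $n\gg0$, $(Da)_{(n)}b=-na_{(n-1)}b$, $a_{(n)}(Db)=D(a_{(n)}b)+na_{(n-1)}b$. Pseudoproduct $a*b=\sum_{s\ge0}\frac{(-D)^s}{s!}\otimes1\otimes_H(a_{(s)}b)$; expanded pseudoproduct: if $a*b=\sum_i f_i\otimes g_i\otimes_H c_i$ then $(F\otimes_H a)*(G\otimes_H b)=\sum_iF\Delta^{(n)}(f_i)\otimes G\Delta^{(m)}(g_i)\otimes_H c_i$. For a bracketing $t$, $t^*(b_1,\dots,b_n)\in H^{\otimes n}\otimes_HC$ is obtained by replacing each product by the expanded pseudoproduct, with $b_i$ regarded as $1\otimes_H b_i$. $i\sigma$ denotes the image of $i$ under $\sigma$, and $\sigma\otimes_H\mathrm{id}_C$ is induced by the permutation of tensor factors of $H^{\otimes n}$ sending the $k$-th factor to position $k\sigma$. Coefficient algebra: $\operatorname{Coeff}C=\Bbbk[t,t^{-1}]\otimes_HC$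 ($\Bbbk[t,t^{-1}]$ a right $H$-module via $t^nD=-nt^{n-1}$), $a(x):=x\otimes_Ha$, with product $a(t^n)b(t^m)=\sum_{s\ge0}\binom ns(a_{(s)}b)(t^{n+m-s})$. On $\Bbbk[t]$: coproduct $\Delta(t)=t\otimes1+1\otimes t$ (notation $x_{(1)}\otimes x_{(2)}$), antipode $S(t)=-t$, pairing with $H$: $\langle t^k,D^m\rangle=k!\,\delta_{k,m}$. Let $\theta:H^{\otimes n}\otimes_HC\to H^{\otimes(n-1)}\otimes C$ be the isomorphism $(h_1\otimes\cdots\otimes h_{n-1}\otimes1)\otimes_Hc\mapsto h_1\otimes\cdots\otimes h_{n-1}\otimes c$. For $x_i\in\Bbbk[t]$, $P^{x_1\otimes\cdots\otimes x_{n-1}}=(\langle S(x_1),\cdot\rangle\otimes\cdots\otimes\langle S(x_{n-1}),\cdot\rangle\otimes\mathrm{id}_C)\theta:H^{\otimes n}\otimes_HC\to C$, and $P^{\bar x}_y(A):=y\otimes_HP^{\bar x}(A)\in\operatorname{Coeff}C$. *)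

theory Defs
  imports Main "HOL-Library.Function_Algebras" "HOL-Library.FuncSet"
    "HOL-Computational_Algebra.Polynomial" "HOL-Combinatorics.Permutations"
begin

text \<open>A conformal algebra over a field 'k (char 0): a 'k-vector space C (type 'c, scalar
  multiplication sc), the action of D (Dop, linear), bilinear n-products (pr n a b = a_(n) b),
  locality and the two sesquilinearity axioms.  Natural-number subtraction n - 1 at n = 0 is
  harmless since the term is multiplied by n = 0.\<close>

definition conformal_algebra ::
  "('k::field_char_0 \<Rightarrow> 'c::ab_group_add \<Rightarrow> 'c) \<Rightarrow> ('c \<Rightarrow> 'c) \<Rightarrow> (nat \<Rightarrow> 'c \<Rightarrow> 'c \<Rightarrow> 'c) \<Rightarrow> bool" where
  "conformal_algebra sc Dop pr \<longleftrightarrow>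
     vector_space sc \<and>
     Vector_Spaces.linear sc sc Dop \<and>
     (\<forall>n a. Vector_Spaces.linear sc sc (pr n a)) \<and>
     (\<forall>n b. Vector_Spaces.linear sc sc (\<lambda>a. pr n a b)) \<and>
     (\<forall>a b. \<exists>N. \<forall>n\<ge>N. pr n a b = 0) \<and>
     (\<forall>n a b. pr n (Dop a) b = sc (- of_nat n) (pr (n - 1) a b)) \<and>
     (\<forall>n a b. pr n a (Dop b) = Dop (pr n a b) + sc (of_nat n) (pr (n - 1) a b))"

datatype bracketing = Leaf | Node bracketing bracketing

fun leaves :: "bracketing \<Rightarrow> nat" where
  "leaves Leaf = 1"
| "leaves (Node l r) = leaves l + leaves r"

text \<open>An element of H^{\<otimes>n} \<otimes> C (H = k[D]) is represented by its coefficient function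
  A :: nat list \<Rightarrow> 'c (finitely supported on lists of length n):
  the element is  \<Sum>_\<alpha> D^{\<alpha>_0} \<otimes> ... \<otimes> D^{\<alpha>_{n-1}} \<otimes> A \<alpha>.
  Such a representative also denotes its class in H^{\<otimes>n} \<otimes>_H C.  Indices are 0-based.\<close>

definition tens1 :: "'c::zero \<Rightarrow> nat list \<Rightarrow> 'c" where
  "tens1 b = (\<lambda>\<alpha>. if \<alpha> = [0] then b else 0)"

text \<open>Expanded pseudoproduct of an element of H^{\<otimes>n} \<otimes>_H C with one of H^{\<otimes>m} \<otimes>_H C
  (extended bilinearly): from a*b = \<Sum>_s (-D)^s/s! \<otimes> 1 \<otimes>_H a_(s) b we get
  (D^\<alpha> \<otimes>_H a)*(D^\<beta> \<otimes>_H b) = \<Sum>_s D^\<alpha> \<Delta>^{(n)}((-D)^s/s!) \<otimes> D^\<beta> \<otimes>_H a_(s) b, and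
  \<Delta>^{(n)}((-D)^s)/s! = \<Sum>_{|j|=s} (-1)^s / (\<Prod> j_i!) D^j (multinomial theorem).
  The coefficient of D^\<gamma> is collected by summing over \<alpha> \<le> take n \<gamma>, with j = take n \<gamma> - \<alpha>.\<close>
definition pseudoprod ::
  "('k::field_char_0 \<Rightarrow> 'c::ab_group_add \<Rightarrow> 'c) \<Rightarrow> (nat \<Rightarrow> 'c \<Rightarrow> 'c \<Rightarrow> 'c) \<Rightarrow> nat \<Rightarrow> nat \<Rightarrow>
     (nat list \<Rightarrow> 'c) \<Rightarrow> (nat list \<Rightarrow> 'c) \<Rightarrow> nat list \<Rightarrow> 'c" where
  "pseudoprod sc pr n m A B = (\<lambda>\<gamma>.
     if length \<gamma> = n + m then
       (\<Sum>\<alpha>\<in>{\<alpha>. length \<alpha> = n \<and> list_all2 (\<le>) \<alpha> (take n \<gamma>)}.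
          let j = map2 (-) (take n \<gamma>) \<alpha>; s = sum_list j in
          sc ((-1) ^ s / prod_list (map fact j)) (pr s (A \<alpha>) (B (drop n \<gamma>))))
     else 0)"

fun tstar ::
  "('k::field_char_0 \<Rightarrow> 'c::ab_group_add \<Rightarrow> 'c) \<Rightarrow> (nat \<Rightarrow> 'c \<Rightarrow> 'c \<Rightarrow> 'c) \<Rightarrow> bracketing \<Rightarrow>
     'c list \<Rightarrow> nat list \<Rightarrow> 'c" where
  "tstar sc pr Leaf bs = tens1 (hd bs)"
| "tstar sc pr (Node l r) bs =
     pseudoprod sc pr (leaves l) (leaves r)
       (tstar sc pr l (take (leaves l) bs)) (tstar sc pr r (drop (leaves l) bs))"

text \<open>\<sigma> \<otimes>_H id_C: the k-th tensor factor is moved to position \<sigma> k, i.e.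
  D^{\<alpha>_0} \<otimes> ... \<otimes> D^{\<alpha>_{n-1}} goes to D^\<beta> with \<beta>_{\<sigma> k} = \<alpha>_k.\<close>
definition perm_tens :: "(nat \<Rightarrow> nat) \<Rightarrow> (nat list \<Rightarrow> 'c) \<Rightarrow> nat list \<Rightarrow> 'c" where
  "perm_tens \<sigma> A = (\<lambda>\<beta>. A (map (\<lambda>k. \<beta> ! \<sigma> k) [0..<length \<beta>]))"

text \<open>The isomorphism \<theta> : H^{\<otimes>n} \<otimes>_H C \<rightarrow> H^{\<otimes>(n-1)} \<otimes> C, computed on representatives.
  Writing D_{n} = \<Delta>^{(n)}(D) - u with u = D_1 + ... + D_{n-1} (1-based), we get
  (D^{\<alpha>'} \<otimes> D^k) \<otimes>_H c = \<Sum>_j (k choose j) D^{\<alpha>'} (-u)^{k-j} \<otimes>_H D^j c, so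
  \<theta>(D^{\<alpha>'} \<otimes> D^k \<otimes>_H c) = \<Sum>_{l} (k choose |l|) (-1)^{|l|} |l|!/\<Prod> l_i! D^{\<alpha>'+l} \<otimes> D^{k-|l|} c.\<close>
definition theta ::
  "('k::field_char_0 \<Rightarrow> 'c::ab_group_add \<Rightarrow> 'c) \<Rightarrow> ('c \<Rightarrow> 'c) \<Rightarrow> nat \<Rightarrow> (nat list \<Rightarrow> 'c) \<Rightarrow> nat list \<Rightarrow> 'c" where
  "theta sc Dop n A = (\<lambda>\<beta>.
     if length \<beta> = n - 1 then
       (\<Sum>\<alpha>\<in>{\<alpha>. length \<alpha> = n \<and> A \<alpha> \<noteq> 0 \<and> list_all2 (\<le>) (butlast \<alpha>) \<beta> \<and>
                 sum_list (map2 (-) \<beta> (butlast \<alpha>)) \<le> last \<alpha>}.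
          let l = map2 (-) \<beta> (butlast \<alpha>); r = sum_list l; k = last \<alpha> in
          sc (of_nat (k choose r) * (-1) ^ r * fact r / prod_list (map fact l))
             ((Dop ^^ (k - r)) (A \<alpha>)))
     else 0)"

definition antipode_t :: "'k::comm_ring_1 poly \<Rightarrow> 'k poly" where
  "antipode_t x = pcompose x [:0, -1:]"

text \<open>\<langle>x, D^m\<rangle> for x \<in> k[t], where \<langle>t^k, D^m\<rangle> = k! \<delta>_{k,m}.\<close>
definition pairing :: "'k::field_char_0 poly \<Rightarrow> nat \<Rightarrow> 'k" where
  "pairing x m = fact m * coeff x m"

text \<open>P^{x_1 \<otimes> ... \<otimes> x_{n-1}} : H^{\<otimes>n} \<otimes>_H C \<rightarrow> C (x_i indexed 0..n-2 here).\<close>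
definition Pmap ::
  "('k::field_char_0 \<Rightarrow> 'c::ab_group_add \<Rightarrow> 'c) \<Rightarrow> ('c \<Rightarrow> 'c) \<Rightarrow> nat \<Rightarrow> (nat \<Rightarrow> 'k poly) \<Rightarrow>
     (nat list \<Rightarrow> 'c) \<Rightarrow> 'c" where
  "Pmap sc Dop n xs A =
     (\<Sum>\<beta>\<in>{\<beta>. length \<beta> = n - 1 \<and> theta sc Dop n A \<beta> \<noteq> 0}.
        sc (\<Prod>i<n - 1. pairing (antipode_t (xs i)) (\<beta> ! i)) (theta sc Dop n A \<beta>))"

text \<open>Laurent polynomials y \<in> k[t,t^{-1}] are finitely supported functions int \<Rightarrow> 'k
  (y = \<Sum> y p t^p).  An element of k[t,t^{-1}] \<otimes> C is represented by R :: int \<Rightarrow> 'c,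
  finitely supported, meaning \<Sum>_p t^p \<otimes> R p; it denotes its class in Coeff C.\<close>

text \<open>Generators of the kernel of k[t,t^{-1}] \<otimes> C \<rightarrow> Coeff C:  t^m D \<otimes> c - t^m \<otimes> D c,
  where t^m D = -m t^{m-1}.\<close>
definition coeff_rel :: "('k::field_char_0 \<Rightarrow> 'c::ab_group_add \<Rightarrow> 'c) \<Rightarrow> ('c \<Rightarrow> 'c) \<Rightarrow> (int \<Rightarrow> 'c) set" where
  "coeff_rel sc Dop = {(\<lambda>p. (if p = m - 1 then sc (- of_int m) c else 0) - (if p = m then Dop c else 0))
                        | m c. True}"

definition coeff_eq ::
  "('k::field_char_0 \<Rightarrow> 'c::ab_group_add \<Rightarrow> 'c) \<Rightarrow> ('c \<Rightarrow> 'c) \<Rightarrow> (int \<Rightarrow> 'c) \<Rightarrow> (int \<Rightarrow> 'c) \<Rightarrow> bool" where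
  "coeff_eq sc Dop R1 R2 \<longleftrightarrow>
     R1 - R2 \<in> module.span (\<lambda>r f p. sc r (f p)) (coeff_rel sc Dop)"

definition coeff_elem :: "('k \<Rightarrow> 'c \<Rightarrow> 'c) \<Rightarrow> 'c \<Rightarrow> (int \<Rightarrow> 'k) \<Rightarrow> int \<Rightarrow> 'c" where
  "coeff_elem sc a \<zeta> = (\<lambda>p. sc (\<zeta> p) a)"

text \<open>Product of Coeff C on representatives, extended bilinearly from
  a(t^n) b(t^m) = \<Sum>_{s\<ge>0} (n choose s) (a_(s) b)(t^{n+m-s}).\<close>
definition coeff_mult ::
  "('k::field_char_0 \<Rightarrow> 'c::ab_group_add \<Rightarrow> 'c) \<Rightarrow> (nat \<Rightarrow> 'c \<Rightarrow> 'c \<Rightarrow> 'c) \<Rightarrow>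
     (int \<Rightarrow> 'c) \<Rightarrow> (int \<Rightarrow> 'c) \<Rightarrow> int \<Rightarrow> 'c" where
  "coeff_mult sc pr R1 R2 = (\<lambda>p.
     \<Sum>(n, m)\<in>{(n, m). R1 n \<noteq> 0 \<and> R2 m \<noteq> 0 \<and> p \<le> n + m}.
       sc ((of_int n :: 'k) gchoose nat (n + m - p)) (pr (nat (n + m - p)) (R1 n) (R2 m)))"

fun tmon ::
  "('k::field_char_0 \<Rightarrow> 'c::ab_group_add \<Rightarrow> 'c) \<Rightarrow> (nat \<Rightarrow> 'c \<Rightarrow> 'c \<Rightarrow> 'c) \<Rightarrow> bracketing \<Rightarrow>
     (int \<Rightarrow> 'c) list \<Rightarrow> int \<Rightarrow> 'c" where
  "tmon sc pr Leaf us = hd us"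
| "tmon sc pr (Node l r) us =
     coeff_mult sc pr (tmon sc pr l (take (leaves l) us)) (tmon sc pr r (drop (leaves l) us))"

definition Pymap ::
  "('k::field_char_0 \<Rightarrow> 'c::ab_group_add \<Rightarrow> 'c) \<Rightarrow> ('c \<Rightarrow> 'c) \<Rightarrow> nat \<Rightarrow> (nat \<Rightarrow> 'k poly) \<Rightarrow>
     (int \<Rightarrow> 'k) \<Rightarrow> (nat list \<Rightarrow> 'c) \<Rightarrow> int \<Rightarrow> 'c" where
  "Pymap sc Dop n xs y A = coeff_elem sc (Pmap sc Dop n xs A) y"

text \<open>Laurent monomial t^e, and the Laurent polynomial y * S(t^J) = (-1)^J y t^J.\<close>
definition lmono :: "int \<Rightarrow> int \<Rightarrow> 'k::comm_ring_1" where
  "lmono e = (\<lambda>p. if p = e then 1 else 0)"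

definition y_antipode :: "(int \<Rightarrow> 'k::comm_ring_1) \<Rightarrow> nat \<Rightarrow> int \<Rightarrow> 'k" where
  "y_antipode y J = (\<lambda>p. (-1) ^ J * y (p - int J))"

end

theory Submission
  imports Defs "HOL-Computational_Algebra.Formal_Power_Series"
begin

lemma sum_fun_apply: "(\<Sum>i\<in>A. f i) x = (\<Sum>i\<in>A. f i x)"
  by (induct A rule: infinite_finite_induct) auto

definition mon :: "int \<Rightarrow> 'c::comm_monoid_add \<Rightarrow> int \<Rightarrow> 'c" where
  "mon p c = (\<lambda>q. if q = p then c else 0)"

definition fw :: "'k::field_char_0 \<Rightarrow> nat \<Rightarrow> 'k" where
  "fw x k = (-1) ^ k * fact k * (x gchoose k)"

lemma mon_add: "mon p (x + y) = mon p x + mon p y"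
  by (auto simp: mon_def fun_eq_iff)
lemma mon_0[simp]: "mon p 0 = 0"
  by (auto simp: mon_def fun_eq_iff)
lemma mon_sum: "mon p (\<Sum>i\<in>A. f i) = (\<Sum>i\<in>A. mon p (f i))"
  by (induct A rule: infinite_finite_induct) (auto simp: mon_add)
lemma mon_diff: "mon p ((x::'c::ab_group_add) - y) = mon p x - mon p y"
  by (auto simp: mon_def fun_eq_iff)

locale CA =
  fixes sc :: "'k::field_char_0 \<Rightarrow> 'c::ab_group_add \<Rightarrow> 'c"
    and Dop :: "'c \<Rightarrow> 'c" and pr :: "nat \<Rightarrow> 'c \<Rightarrow> 'c \<Rightarrow> 'c"
  assumes ca: "conformal_algebra sc Dop pr"
begin

lemma vs: "vector_space sc" using ca by (simp add: conformal_algebra_def)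

sublocale V: vector_space sc by (rule vs)

lemma Dhom: "module_hom sc sc Dop"
  using ca by (simp add: conformal_algebra_def module_hom_iff_linear)
lemma prhom_r: "module_hom sc sc (pr n a)"
  using ca by (simp add: conformal_algebra_def module_hom_iff_linear)
lemma prhom_l: "module_hom sc sc (\<lambda>a. pr n a b)"
  using ca by (simp add: conformal_algebra_def module_hom_iff_linear)

lemmas D_add = module_hom.add[OF Dhom] and D_sc = module_hom.scale[OF Dhom]
  and D_0 = module_hom.zero[OF Dhom] and D_sum = module_hom.sum[OF Dhom]
lemmas pr_add_r = module_hom.add[OF prhom_r] and pr_sc_r = module_hom.scale[OF prhom_r]
  and pr_0_r = module_hom.zero[OF prhom_r] and pr_sum_r = module_hom.sum[OF prhom_r]
  and pr_diff_r = module_hom.diff[OF prhom_r]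
lemma pr_add_l: "pr n (x + y) b = pr n x b + pr n y b"
  using module_hom.add[OF prhom_l] .
lemma pr_sc_l: "pr n (sc c x) b = sc c (pr n x b)"
  using module_hom.scale[OF prhom_l] .
lemma pr_0_l: "pr n 0 b = 0"
  using module_hom.zero[OF prhom_l] .
lemma pr_sum_l: "pr n (\<Sum>i\<in>A. f i) b = (\<Sum>i\<in>A. pr n (f i) b)"
  using module_hom.sum[OF prhom_l] .
lemma pr_diff_l: "pr n (x - y) b = pr n x b - pr n y b"
  using module_hom.diff[OF prhom_l] .

lemma ca_parts: "(\<forall>a b. \<exists>N. \<forall>n\<ge>N. pr n a b = 0) \<and>
   (\<forall>n a b. pr n (Dop a) b = sc (- of_nat n) (pr (n - 1) a b)) \<and>
   (\<forall>n a b. pr n a (Dop b) = Dop (pr n a b) + sc (of_nat n) (pr (n - 1) a b))"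
  using ca unfolding conformal_algebra_def by (elim conjE) (intro conjI; assumption)

lemma loc: "\<exists>N. \<forall>n\<ge>N. pr n a b = 0"
  using ca_parts by blast
lemma sesq_l: "pr n (Dop a) b = sc (- of_nat n) (pr (n - 1) a b)"
  using ca_parts by blast
lemma sesq_r: "pr n a (Dop b) = Dop (pr n a b) + sc (of_nat n) (pr (n - 1) a b)"
  using ca_parts by blast

declare D_0[simp] pr_0_r[simp] pr_0_l[simp]

abbreviation vsc :: "'k \<Rightarrow> (int \<Rightarrow> 'c) \<Rightarrow> int \<Rightarrow> 'c" where
  "vsc \<equiv> \<lambda>r f p. sc r (f p)"

sublocale F: vector_space vsc
  by unfold_locales (auto simp: fun_eq_iff V.scale_right_distrib V.scale_left_distrib)

definition Sp where "Sp = F.span (coeff_rel sc Dop)"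
definition ceq (infix \<open>\<approx>\<close> 50) where "ceq R1 R2 \<longleftrightarrow> coeff_eq sc Dop R1 R2"

lemma ceq_def': "R1 \<approx> R2 \<longleftrightarrow> R1 - R2 \<in> Sp"
  by (simp add: ceq_def coeff_eq_def Sp_def)

lemma ceq_refl[simp]: "R \<approx> R" by (simp add: ceq_def' Sp_def F.span_zero)
lemma ceq_sym: "R1 \<approx> R2 \<Longrightarrow> R2 \<approx> R1"
  unfolding ceq_def' Sp_def using F.span_neg by fastforce
lemma ceq_trans: "R1 \<approx> R2 \<Longrightarrow> R2 \<approx> R3 \<Longrightarrow> R1 \<approx> R3"
  unfolding ceq_def' Sp_def using F.span_add by fastforce
lemma ceq_add: "R1 \<approx> R2 \<Longrightarrow> S1 \<approx> S2 \<Longrightarrow> R1 + S1 \<approx> R2 + S2"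
  unfolding ceq_def' Sp_def
proof -
  assume "R1 - R2 \<in> F.span (coeff_rel sc Dop)" "S1 - S2 \<in> F.span (coeff_rel sc Dop)"
  then have "(R1 - R2) + (S1 - S2) \<in> F.span (coeff_rel sc Dop)" by (rule F.span_add)
  then show "R1 + S1 - (R2 + S2) \<in> F.span (coeff_rel sc Dop)" by (simp only: add_diff_add)
qed
lemma ceq_vsc: "R1 \<approx> R2 \<Longrightarrow> vsc c R1 \<approx> vsc c R2"
  unfolding ceq_def' Sp_def
proof -
  assume "R1 - R2 \<in> F.span (coeff_rel sc Dop)"
  then have "vsc c (R1 - R2) \<in> F.span (coeff_rel sc Dop)" by (rule F.span_scale)
  moreover have "vsc c (R1 - R2) = vsc c R1 - vsc c R2"
    by (auto simp: fun_eq_iff V.scale_right_diff_distrib)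
  ultimately show "vsc c R1 - vsc c R2 \<in> F.span (coeff_rel sc Dop)" by simp
qed
lemma ceq_sum: "(\<And>i. i \<in> A \<Longrightarrow> f i \<approx> g i) \<Longrightarrow> (\<Sum>i\<in>A. f i) \<approx> (\<Sum>i\<in>A. g i)"
proof (induct A rule: infinite_finite_induct)
  case (insert x F)
  then have "f x + sum f F \<approx> g x + sum g F" by (intro ceq_add) auto
  then show ?case unfolding sum.insert[OF insert(1,2)] .
qed auto

lemma mon_sc: "mon p (sc c x) = vsc c (mon p x)"
  by (auto simp: mon_def fun_eq_iff)

lemma mon_D: "mon p (Dop c) \<approx> mon (p - 1) (sc (- of_int p) c)"
proof -
  let ?g = "\<lambda>q. (if q = p - 1 then sc (- of_int p) c else 0) - (if q = p then Dop c else 0)"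
  have "?g \<in> coeff_rel sc Dop" unfolding coeff_rel_def by blast
  then have "?g \<in> Sp" unfolding Sp_def by (rule F.span_base)
  then have "- ?g \<in> Sp" unfolding Sp_def by (rule F.span_neg)
  moreover have "- ?g = mon p (Dop c) - mon (p - 1) (sc (- of_int p) c)"
    by (auto simp: fun_eq_iff mon_def)
  ultimately show ?thesis by (simp add: ceq_def')
qed

lemma fw_Suc: "fw x (Suc k) = - x * fw (x - 1) k"
proof -
  have h: "of_nat (Suc k) * (x gchoose Suc k) = x * ((x - 1) gchoose k)"
    by (rule gbinomial_absorption)
  have "fw x (Suc k) = - ((-1)^k * fact k * (of_nat (Suc k) * (x gchoose Suc k)))"
    by (simp add: fw_def fact_Suc mult_ac)
  also have "\<dots> = - ((-1)^k * fact k * (x * ((x - 1) gchoose k)))" by (simp only: h)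
  also have "\<dots> = - x * fw (x - 1) k" by (simp add: fw_def mult_ac)
  finally show ?thesis .
qed

lemmas [trans] = ceq_trans
lemma ceq_eq_trans[trans]: "a \<approx> b \<Longrightarrow> b = c \<Longrightarrow> a \<approx> c" by simp
lemma eq_ceq_trans[trans]: "a = b \<Longrightarrow> b \<approx> c \<Longrightarrow> a \<approx> c" by simp

lemma mon_Dpow: "mon p ((Dop ^^ k) c) \<approx> mon (p - int k) (sc (fw (of_int p) k) c)"
proof (induct k arbitrary: p)
  case 0
  then show ?case by (simp add: fw_def)
next
  case (Suc k)
  have "mon p ((Dop ^^ Suc k) c) = mon p (Dop ((Dop ^^ k) c))" by simp
  also have "\<dots> \<approx> mon (p - 1) (sc (- of_int p) ((Dop ^^ k) c))" by (rule mon_D)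
  also have "\<dots> = vsc (- of_int p) (mon (p - 1) ((Dop ^^ k) c))" by (rule mon_sc)
  also have "\<dots> \<approx> vsc (- of_int p) (mon (p - 1 - int k) (sc (fw (of_int (p - 1)) k) c))"
    by (rule ceq_vsc) (rule Suc)
  also have "\<dots> = mon (p - 1 - int k) (sc (- of_int p) (sc (fw (of_int (p - 1)) k) c))"
    by (simp only: mon_sc)
  also have "\<dots> = mon (p - int (Suc k)) (sc (fw (of_int p) (Suc k)) c)"
  proof -
    have "p - 1 - int k = p - int (Suc k)" by simp
    moreover have "- of_int p * fw (of_int (p - 1)) k = fw (of_int p :: 'k) (Suc k)"
      by (simp add: fw_Suc)
    ultimately show ?thesis by (simp only: V.scale_scale)
  qed
  finally show ?case .
qed

end

definition fsup :: "('a \<Rightarrow> 'c::zero) \<Rightarrow> bool" where "fsup R \<longleftrightarrow> finite {p. R p \<noteq> 0}"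

lemma fsup_0[simp]: "fsup 0" by (simp add: fsup_def)
lemma fsup_add: "fsup R \<Longrightarrow> fsup S \<Longrightarrow> fsup ((R::_\<Rightarrow>'c::monoid_add) + S)"
  unfolding fsup_def by (rule finite_subset[of _ "{p. R p \<noteq> 0} \<union> {p. S p \<noteq> 0}"]) auto
lemma fsup_neg: "fsup R \<Longrightarrow> fsup (- (R::_\<Rightarrow>'c::group_add))"
  unfolding fsup_def by simp
lemma fsup_diff: "fsup R \<Longrightarrow> fsup S \<Longrightarrow> fsup ((R::_\<Rightarrow>'c::group_add) - S)"
  unfolding fsup_def by (rule finite_subset[of _ "{p. R p \<noteq> 0} \<union> {p. S p \<noteq> 0}"]) auto
lemma fsup_sum: "(\<And>i. i \<in> A \<Longrightarrow> fsup (f i)) \<Longrightarrow> fsup (\<Sum>i\<in>A. (f i :: _ \<Rightarrow> 'c::comm_monoid_add))"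
  by (induct A rule: infinite_finite_induct) (auto intro: fsup_add)
lemma fsup_mon[simp]: "fsup (mon p c)"
  unfolding fsup_def mon_def by (rule finite_subset[of _ "{p}"]) auto

context CA begin

lemma fsup_vsc: "fsup R \<Longrightarrow> fsup (vsc c R)"
  unfolding fsup_def by (rule finite_subset) auto

definition cmm :: "int \<Rightarrow> 'c \<Rightarrow> int \<Rightarrow> 'c \<Rightarrow> int \<Rightarrow> 'c" where
  "cmm n a m b = (\<lambda>p. if p \<le> n + m then sc ((of_int n :: 'k) gchoose nat (n + m - p))
       (pr (nat (n + m - p)) a b) else 0)"

lemma cm_expand:
  assumes "finite S1" "finite S2" "{p. R1 p \<noteq> 0} \<subseteq> S1" "{p. R2 p \<noteq> 0} \<subseteq> S2"
  shows "coeff_mult sc pr R1 R2 = (\<Sum>n\<in>S1. \<Sum>m\<in>S2. cmm n (R1 n) m (R2 m))"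
proof
  fix p
  have "(\<Sum>n\<in>S1. \<Sum>m\<in>S2. cmm n (R1 n) m (R2 m)) p = (\<Sum>n\<in>S1. \<Sum>m\<in>S2. cmm n (R1 n) m (R2 m) p)"
    by (simp add: sum_fun_apply)
  also have "\<dots> = (\<Sum>(n,m)\<in>S1\<times>S2. cmm n (R1 n) m (R2 m) p)"
    by (rule sum.cartesian_product)
  also have "\<dots> = (\<Sum>(n,m)\<in>{(n,m). R1 n \<noteq> 0 \<and> R2 m \<noteq> 0 \<and> p \<le> n+m}.
       sc ((of_int n :: 'k) gchoose nat (n+m-p)) (pr (nat (n+m-p)) (R1 n) (R2 m)))"
    apply (rule sum.mono_neutral_cong_right) using assms by (auto simp: cmm_def split: if_splits)
  finally show "coeff_mult sc pr R1 R2 p = (\<Sum>n\<in>S1. \<Sum>m\<in>S2. cmm n (R1 n) m (R2 m)) p"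
    by (simp add: coeff_mult_def)
qed

lemma cmm_add_l: "cmm n (a + a') m b = cmm n a m b + cmm n a' m b"
  by (auto simp: cmm_def fun_eq_iff pr_add_l V.scale_right_distrib)
lemma cmm_add_r: "cmm n a m (b + b') = cmm n a m b + cmm n a m b'"
  by (auto simp: cmm_def fun_eq_iff pr_add_r V.scale_right_distrib)
lemma cmm_sc_l: "cmm n (sc c a) m b = vsc c (cmm n a m b)"
  by (auto simp: cmm_def fun_eq_iff pr_sc_l mult.commute)
lemma cmm_sc_r: "cmm n a m (sc c b) = vsc c (cmm n a m b)"
  by (auto simp: cmm_def fun_eq_iff pr_sc_r mult.commute)
lemma cmm_0_l[simp]: "cmm n 0 m b = 0"
  by (auto simp: cmm_def fun_eq_iff)
lemma cmm_0_r[simp]: "cmm n a m 0 = 0"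
  by (auto simp: cmm_def fun_eq_iff)
lemma cmm_neg_r: "cmm n a m (- b) = - cmm n a m b"
  by (auto simp: cmm_def fun_eq_iff module_hom.neg[OF prhom_r])

lemma cmm_fsup: "fsup (cmm n a m b)"
proof -
  obtain N where N: "\<forall>s\<ge>N. pr s a b = 0" using loc by blast
  show ?thesis unfolding fsup_def
  proof (rule finite_subset[of _ "{n + m - int N .. n + m}"])
    show "{p. cmm n a m b p \<noteq> 0} \<subseteq> {n + m - int N .. n + m}"
    proof
      fix x assume "x \<in> {p. cmm n a m b p \<noteq> 0}"
      then have h: "x \<le> n+m" "pr (nat (n+m-x)) a b \<noteq> 0" by (auto simp: cmm_def split: if_splits)
      then have "nat (n+m-x) < N" using N by (meson not_less)
      with h show "x \<in> {n + m - int N .. n + m}" by auto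
    qed
  qed auto
qed

lemma supp_sub: "{p. R p \<noteq> 0} \<subseteq> {p. R p \<noteq> 0}" by simp

lemma cm_fsup: "fsup R1 \<Longrightarrow> fsup R2 \<Longrightarrow> fsup (coeff_mult sc pr R1 R2)"
proof -
  assume "fsup R1" "fsup R2"
  then have f: "finite {p. R1 p \<noteq> 0}" "finite {p. R2 p \<noteq> 0}" by (auto simp: fsup_def)
  show ?thesis by (subst cm_expand[OF f supp_sub supp_sub]) (intro fsup_sum cmm_fsup)
qed

lemma cm_add_l:
  assumes "fsup R" "fsup R'" "fsup S"
  shows "coeff_mult sc pr (R + R') S = coeff_mult sc pr R S + coeff_mult sc pr R' S"
proof -
  let ?A = "{p. R p \<noteq> 0} \<union> {p. R' p \<noteq> 0}"
  have f: "finite ?A" "finite {p. S p \<noteq> 0}" using assms by (auto simp: fsup_def)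
  show ?thesis
    apply (subst (1 2 3) cm_expand[OF f(1) f(2) _ supp_sub])
    by (auto simp: cmm_add_l sum.distrib)
qed

lemma cm_add_r:
  assumes "fsup R" "fsup S" "fsup S'"
  shows "coeff_mult sc pr R (S + S') = coeff_mult sc pr R S + coeff_mult sc pr R S'"
proof -
  let ?A = "{p. S p \<noteq> 0} \<union> {p. S' p \<noteq> 0}"
  have f: "finite {p. R p \<noteq> 0}" "finite ?A" using assms by (auto simp: fsup_def)
  show ?thesis
    apply (subst (1 2 3) cm_expand[OF f(1) f(2) supp_sub])
    by (auto simp: cmm_add_r sum.distrib)
qed

lemma vsc_sum: "vsc c (\<Sum>i\<in>A. f i) = (\<Sum>i\<in>A. vsc c (f i))"
  by (auto simp: fun_eq_iff sum_fun_apply V.scale_sum_right)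

lemma cm_vsc_l:
  assumes "fsup R" "fsup S"
  shows "coeff_mult sc pr (vsc c R) S = vsc c (coeff_mult sc pr R S)"
proof -
  have f: "finite {p. R p \<noteq> 0}" "finite {p. S p \<noteq> 0}" using assms by (auto simp: fsup_def)
  show ?thesis
    apply (subst (1 2) cm_expand[OF f(1) f(2) _ supp_sub])
    by (auto simp: cmm_sc_l vsc_sum)
qed

lemma cm_vsc_r:
  assumes "fsup R" "fsup S"
  shows "coeff_mult sc pr R (vsc c S) = vsc c (coeff_mult sc pr R S)"
proof -
  have f: "finite {p. R p \<noteq> 0}" "finite {p. S p \<noteq> 0}" using assms by (auto simp: fsup_def)
  show ?thesis
    apply (subst (1 2) cm_expand[OF f(1) f(2) supp_sub])
    by (auto simp: cmm_sc_r vsc_sum)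
qed

lemma cm_0_l[simp]: "coeff_mult sc pr 0 S = 0"
  by (simp add: coeff_mult_def fun_eq_iff)
lemma cm_0_r[simp]: "coeff_mult sc pr R 0 = 0"
  by (simp add: coeff_mult_def fun_eq_iff)

lemma cm_sum_l:
  assumes "\<And>i. i \<in> A \<Longrightarrow> fsup (R i)" "fsup S"
  shows "coeff_mult sc pr (\<Sum>i\<in>A. R i) S = (\<Sum>i\<in>A. coeff_mult sc pr (R i) S)"
  using assms
proof (induct A rule: infinite_finite_induct)
  case (insert x F)
  then have "coeff_mult sc pr (R x + (\<Sum>i\<in>F. R i)) S = coeff_mult sc pr (R x) S + (\<Sum>i\<in>F. coeff_mult sc pr (R i) S)"
    by (subst cm_add_l) (auto intro: fsup_sum)
  then show ?case unfolding sum.insert[OF insert(1,2)] .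
qed auto

lemma cm_sum_r:
  assumes "\<And>i. i \<in> A \<Longrightarrow> fsup (S i)" "fsup R"
  shows "coeff_mult sc pr R (\<Sum>i\<in>A. S i) = (\<Sum>i\<in>A. coeff_mult sc pr R (S i))"
  using assms
proof (induct A rule: infinite_finite_induct)
  case (insert x F)
  then have "coeff_mult sc pr R (S x + (\<Sum>i\<in>F. S i)) = coeff_mult sc pr R (S x) + (\<Sum>i\<in>F. coeff_mult sc pr R (S i))"
    by (subst cm_add_r) (auto intro: fsup_sum)
  then show ?case unfolding sum.insert[OF insert(1,2)] .
qed auto

lemma cm_mon: "coeff_mult sc pr (mon n a) (mon m b) = cmm n a m b"
  by (subst cm_expand[of "{n}" "{m}"]) (auto simp: mon_def)

end

context CA begin

lemma gen_form: "(\<lambda>p. (if p = m - 1 then sc (- of_int m) c else 0) - (if p = m then Dop c else 0))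
   = mon (m - 1) (sc (- of_int m) c) - mon m (Dop c)"
  by (auto simp: fun_eq_iff mon_def)

lemma Sp_fsup: "x \<in> Sp \<Longrightarrow> fsup x"
  unfolding Sp_def
proof (induct rule: F.span_induct)
  case base
  show ?case by (rule F.subspaceI) (auto intro: fsup_add fsup_vsc)
next
  case (step x)
  then show ?case by (auto simp: coeff_rel_def gen_form intro!: fsup_diff)
qed

lemma cmm_sum:
  assumes N: "\<forall>s\<ge>N. pr s a b = 0"
  shows "cmm n a m b = (\<Sum>s<N. mon (n + m - int s) (sc ((of_int n :: 'k) gchoose s) (pr s a b)))"
proof
  fix p
  show "cmm n a m b p = (\<Sum>s<N. mon (n + m - int s) (sc ((of_int n :: 'k) gchoose s) (pr s a b))) p"
  proof (cases "p \<le> n + m")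
    case True
    have "(\<Sum>s<N. mon (n + m - int s) (sc ((of_int n :: 'k) gchoose s) (pr s a b))) p
        = (\<Sum>s<N. if s = nat (n + m - p) then sc ((of_int n :: 'k) gchoose s) (pr s a b) else 0)"
      unfolding sum_fun_apply by (rule sum.cong) (use True in \<open>auto simp: mon_def\<close>)
    also have "\<dots> = cmm n a m b p"
      using True N by (auto simp: cmm_def)
    finally show ?thesis by simp
  next
    case False
    then show ?thesis by (auto simp: cmm_def sum_fun_apply mon_def intro!: sum.neutral)
  qed
qed

lemma cmm_gen_l: "cmm (m - 1) (sc (- of_int m) c) m' b = cmm m (Dop c) m' b"
proof
  fix p
  show "cmm (m - 1) (sc (- of_int m) c) m' b p = cmm m (Dop c) m' b p"
  proof (cases "p \<le> m - 1 + m'")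
    case True
    define k where "k = nat (m - 1 + m' - p)"
    have k: "nat (m + m' - p) = Suc k" "nat (m - 1 + m' - p) = k"
      using True unfolding k_def by arith+
    have e: "(of_int (m - 1) gchoose k) * (- of_int m) = ((of_int m :: 'k) gchoose Suc k) * (- of_nat (Suc k))"
    proof -
      have h: "of_nat (Suc k) * ((of_int m :: 'k) gchoose Suc k) = of_int m * ((of_int m - 1) gchoose k)"
        by (rule gbinomial_absorption)
      have "(of_int (m - 1) gchoose k) * (- of_int m) = - (of_int m * ((of_int m - 1) gchoose k) :: 'k)"
        by (simp add: mult.commute)
      also have "\<dots> = - (of_nat (Suc k) * ((of_int m :: 'k) gchoose Suc k))" by (simp only: h)
      also have "\<dots> = ((of_int m :: 'k) gchoose Suc k) * (- of_nat (Suc k))" by (simp add: algebra_simps)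
      finally show ?thesis .
    qed
    have T2: "p \<le> m + m'" using True by simp
    have "cmm (m - 1) (sc (- of_int m) c) m' b p = sc ((of_int (m-1) gchoose k) * (- of_int m)) (pr k c b)"
      unfolding cmm_def using True by (simp only: if_True k(2) pr_sc_l V.scale_scale)
    also have "\<dots> = sc (((of_int m :: 'k) gchoose Suc k) * (- of_nat (Suc k))) (pr k c b)"
      by (simp only: e)
    also have "\<dots> = cmm m (Dop c) m' b p"
      unfolding cmm_def using T2 by (simp only: if_True k(1) sesq_l V.scale_scale diff_Suc_1)
    finally show ?thesis .
  next
    case False
    show ?thesis
    proof (cases "p = m + m'")
      case True
      then show ?thesis using False by (simp add: cmm_def sesq_l)
    next
      case False
      then show ?thesis using \<open>\<not> p \<le> m - 1 + m'\<close> by (simp add: cmm_def)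
    qed
  qed
qed

lemma coef_id: "- of_int (n + M - int s) * ((of_int n :: 'k) gchoose s) + ((of_int n :: 'k) gchoose Suc s) * of_nat (Suc s)
   = ((of_int n :: 'k) gchoose s) * (- of_int M)"
proof -
  have h1: "of_nat (Suc s) * ((of_int n :: 'k) gchoose Suc s) = of_int n * ((of_int n - 1) gchoose s)"
    by (rule gbinomial_absorption)
  have h2: "(of_int n - of_nat s) * ((of_int n :: 'k) gchoose s) = of_int n * ((of_int n - 1) gchoose s)"
    by (rule gbinomial_absorb_comp)
  have "((of_int n :: 'k) gchoose Suc s) * of_nat (Suc s) = (of_int n - of_nat s) * ((of_int n :: 'k) gchoose s)"
    using h1 h2 by (simp add: mult.commute)
  then show ?thesis by (simp add: algebra_simps)
qed

lemma cmm_gen_r: "cmm n a (M - 1) (sc (- of_int M) b) \<approx> cmm n a M (Dop b)"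
proof -
  obtain N where N: "\<forall>s\<ge>N. pr s a b = 0" using loc by blast
  have N1: "\<forall>s\<ge>Suc N. pr s a (Dop b) = 0"
  proof (intro allI impI)
    fix s assume "Suc N \<le> s"
    then have "pr s a b = 0" "pr (s - 1) a b = 0" using N by auto
    then show "pr s a (Dop b) = 0" by (simp add: sesq_r)
  qed
  have N2: "\<forall>s\<ge>N. pr s a (sc (- of_int M) b) = 0" using N by (simp add: pr_sc_r del: V.scale_minus_left)
  define T1 where "T1 s = mon (n + M - 1 - int s) (sc (- of_int (n + M - int s) * ((of_int n :: 'k) gchoose s)) (pr s a b))" for s
  define T2 where "T2 s = mon (n + M - int s) (sc (((of_int n :: 'k) gchoose s) * of_nat s) (pr (s - 1) a b))" for s
  have "cmm n a (M - 1) (sc (- of_int M) b) = (\<Sum>s<N. mon (n + (M - 1) - int s) (sc ((of_int n :: 'k) gchoose s) (pr s a (sc (- of_int M) b))))"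
    by (rule cmm_sum[OF N2])
  also have "\<dots> = (\<Sum>s<N. mon (n + M - 1 - int s) (sc (((of_int n :: 'k) gchoose s) * (- of_int M)) (pr s a b)))"
    by (rule sum.cong) (simp_all only: pr_sc_r V.scale_scale add_diff_eq)
  also have "\<dots> = (\<Sum>s<N. T1 s + T2 (Suc s))"
  proof (rule sum.cong)
    fix s
    have e: "n + M - int (Suc s) = n + M - 1 - int s" by simp
    show "mon (n + M - 1 - int s) (sc (((of_int n :: 'k) gchoose s) * (- of_int M)) (pr s a b)) = T1 s + T2 (Suc s)"
      unfolding T1_def T2_def e diff_Suc_1 mon_add[symmetric] V.scale_left_distrib[symmetric] coef_id ..
  qed simp
  also have "\<dots> = (\<Sum>s<N. T1 s) + (\<Sum>s<N. T2 (Suc s))" by (rule sum.distrib)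
  also have "\<dots> = (\<Sum>s<Suc N. T1 s) + (\<Sum>s<Suc N. T2 s)"
  proof -
    have "T1 N = 0" using N by (simp add: T1_def)
    moreover have "T2 0 = 0" by (simp add: T2_def)
    ultimately have a: "(\<Sum>s<Suc N. T1 s) = (\<Sum>s<N. T1 s)" and b: "(\<Sum>s<Suc N. T2 s) = (\<Sum>s<N. T2 (Suc s))"
      by (simp only: sum.lessThan_Suc add_0_right) (simp only: sum.lessThan_Suc_shift \<open>T2 0 = 0\<close> add_0)
    show ?thesis by (simp only: a b)
  qed
  also have "\<dots> = (\<Sum>s<Suc N. T1 s + T2 s)" by (rule sum.distrib[symmetric])
  also have "\<dots> \<approx> (\<Sum>s<Suc N. mon (n + M - int s) (Dop (sc ((of_int n :: 'k) gchoose s) (pr s a b))) + T2 s)"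
  proof (rule ceq_sum, rule ceq_add)
    fix s
    have "mon (n + M - int s) (Dop (sc ((of_int n :: 'k) gchoose s) (pr s a b))) \<approx>
      mon (n + M - int s - 1) (sc (- of_int (n + M - int s)) (sc ((of_int n :: 'k) gchoose s) (pr s a b)))"
      by (rule mon_D)
    also have "\<dots> = T1 s"
    proof -
      have e: "n + M - int s - 1 = n + M - 1 - int s" by simp
      show ?thesis unfolding T1_def e by (simp only: V.scale_scale)
    qed
    finally show "T1 s \<approx> mon (n + M - int s) (Dop (sc ((of_int n :: 'k) gchoose s) (pr s a b)))"
      by (rule ceq_sym)
  qed simp
  also have "\<dots> = (\<Sum>s<Suc N. mon (n + M - int s) (sc ((of_int n :: 'k) gchoose s) (pr s a (Dop b))))"
    by (rule sum.cong) (simp_all only: T2_def sesq_r V.scale_right_distrib D_sc V.scale_scale mon_add)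
  also have "\<dots> = cmm n a M (Dop b)"
    by (rule cmm_sum[OF N1, symmetric])
  finally show ?thesis .
qed

lemma cm_diff_l:
  assumes "fsup A" "fsup B" "fsup R"
  shows "coeff_mult sc pr (A - B) R = coeff_mult sc pr A R - coeff_mult sc pr B R"
proof -
  have "coeff_mult sc pr A R = coeff_mult sc pr ((A - B) + B) R" by simp
  also have "\<dots> = coeff_mult sc pr (A - B) R + coeff_mult sc pr B R"
    using assms by (intro cm_add_l) (auto intro: fsup_diff)
  finally show ?thesis by simp
qed

lemma cm_diff_r:
  assumes "fsup A" "fsup B" "fsup R"
  shows "coeff_mult sc pr R (A - B) = coeff_mult sc pr R A - coeff_mult sc pr R B"
proof -
  have "coeff_mult sc pr R A = coeff_mult sc pr R ((A - B) + B)" by simp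
  also have "\<dots> = coeff_mult sc pr R (A - B) + coeff_mult sc pr R B"
    using assms by (intro cm_add_r) (auto intro: fsup_diff)
  finally show ?thesis by simp
qed

lemma cm_mon_l:
  assumes "fsup R"
  shows "coeff_mult sc pr (mon n a) R = (\<Sum>m\<in>{p. R p \<noteq> 0}. cmm n a m (R m))"
proof -
  have f: "finite {p. R p \<noteq> 0}" using assms by (simp add: fsup_def)
  show ?thesis by (subst cm_expand[OF _ f _ supp_sub, of "{n}"]) (auto simp: mon_def)
qed

lemma cm_mon_r:
  assumes "fsup R"
  shows "coeff_mult sc pr R (mon m b) = (\<Sum>n\<in>{p. R p \<noteq> 0}. cmm n (R n) m b)"
proof -
  have f: "finite {p. R p \<noteq> 0}" using assms by (simp add: fsup_def)
  show ?thesis by (subst cm_expand[OF f _ supp_sub, of "{m}"]) (auto simp: mon_def)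
qed

lemma Sp_0: "0 \<in> Sp" unfolding Sp_def by (rule F.span_zero)
lemma Sp_add: "x \<in> Sp \<Longrightarrow> y \<in> Sp \<Longrightarrow> x + y \<in> Sp" unfolding Sp_def by (rule F.span_add)
lemma Sp_vsc: "x \<in> Sp \<Longrightarrow> vsc c x \<in> Sp" unfolding Sp_def by (rule F.span_scale)
lemma Sp_sum: "(\<And>i. i \<in> A \<Longrightarrow> f i \<in> Sp) \<Longrightarrow> (\<Sum>i\<in>A. f i) \<in> Sp" unfolding Sp_def by (rule F.span_sum)

lemma cm_Sp_l:
  assumes "g \<in> Sp" "fsup R"
  shows "coeff_mult sc pr g R \<in> Sp"
proof -
  have "fsup g \<and> coeff_mult sc pr g R \<in> Sp"
    using assms(1) unfolding Sp_def
  proof (induct rule: F.span_induct)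
    case base
    show ?case
    proof (rule F.subspaceI)
      show "0 \<in> {x. fsup x \<and> coeff_mult sc pr x R \<in> F.span (coeff_rel sc Dop)}"
        using Sp_0 by (simp add: Sp_def)
    next
      fix x y assume "x \<in> {x. fsup x \<and> coeff_mult sc pr x R \<in> F.span (coeff_rel sc Dop)}"
        "y \<in> {x. fsup x \<and> coeff_mult sc pr x R \<in> F.span (coeff_rel sc Dop)}"
      then show "x + y \<in> {x. fsup x \<and> coeff_mult sc pr x R \<in> F.span (coeff_rel sc Dop)}"
        using assms(2) by (auto simp: cm_add_l intro: fsup_add F.span_add)
    next
      fix c x assume "x \<in> {x. fsup x \<and> coeff_mult sc pr x R \<in> F.span (coeff_rel sc Dop)}"
      then show "vsc c x \<in> {x. fsup x \<and> coeff_mult sc pr x R \<in> F.span (coeff_rel sc Dop)}"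
        using assms(2) F.span_scale[of "coeff_mult sc pr x R" _ c] by (auto simp: cm_vsc_l intro: fsup_vsc)
    qed
  next
    case (step x)
    then obtain m c where x: "x = mon (m - 1) (sc (- of_int m) c) - mon m (Dop c)"
      by (auto simp: coeff_rel_def gen_form)
    have "coeff_mult sc pr x R = coeff_mult sc pr (mon (m - 1) (sc (- of_int m) c)) R - coeff_mult sc pr (mon m (Dop c)) R"
      unfolding x using assms(2) by (intro cm_diff_l) auto
    also have "\<dots> = 0"
      using assms(2) by (simp add: cm_mon_l cmm_gen_l del: V.scale_minus_left)
    finally have c: "coeff_mult sc pr x R = 0" .
    have "fsup x" unfolding x by (rule fsup_diff) simp_all
    moreover have "coeff_mult sc pr x R \<in> F.span (coeff_rel sc Dop)" using Sp_0 unfolding c Sp_def .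
    ultimately show ?case by simp
  qed
  then show ?thesis by simp
qed

lemma cm_Sp_r:
  assumes "g \<in> Sp" "fsup R"
  shows "coeff_mult sc pr R g \<in> Sp"
proof -
  have "fsup g \<and> coeff_mult sc pr R g \<in> Sp"
    using assms(1) unfolding Sp_def
  proof (induct rule: F.span_induct)
    case base
    show ?case
    proof (rule F.subspaceI)
      show "0 \<in> {x. fsup x \<and> coeff_mult sc pr R x \<in> F.span (coeff_rel sc Dop)}"
        using Sp_0 by (simp add: Sp_def)
    next
      fix x y assume "x \<in> {x. fsup x \<and> coeff_mult sc pr R x \<in> F.span (coeff_rel sc Dop)}"
        "y \<in> {x. fsup x \<and> coeff_mult sc pr R x \<in> F.span (coeff_rel sc Dop)}"
      then show "x + y \<in> {x. fsup x \<and> coeff_mult sc pr R x \<in> F.span (coeff_rel sc Dop)}"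
        using assms(2) by (auto simp: cm_add_r intro: fsup_add F.span_add)
    next
      fix c x assume "x \<in> {x. fsup x \<and> coeff_mult sc pr R x \<in> F.span (coeff_rel sc Dop)}"
      then show "vsc c x \<in> {x. fsup x \<and> coeff_mult sc pr R x \<in> F.span (coeff_rel sc Dop)}"
        using assms(2) F.span_scale[of "coeff_mult sc pr R x" _ c] by (auto simp: cm_vsc_r intro: fsup_vsc)
    qed
  next
    case (step x)
    then obtain m c where x: "x = mon (m - 1) (sc (- of_int m) c) - mon m (Dop c)"
      by (auto simp: coeff_rel_def gen_form)
    have "coeff_mult sc pr R x = coeff_mult sc pr R (mon (m - 1) (sc (- of_int m) c)) - coeff_mult sc pr R (mon m (Dop c))"
      unfolding x using assms(2) by (intro cm_diff_r) auto
    also have "\<dots> = (\<Sum>n\<in>{p. R p \<noteq> 0}. cmm n (R n) (m - 1) (sc (- of_int m) c) - cmm n (R n) m (Dop c))"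
      using assms(2) by (simp add: cm_mon_r sum_subtractf)
    also have "\<dots> \<in> Sp"
      by (rule Sp_sum) (use cmm_gen_r in \<open>simp add: ceq_def'\<close>)
    finally have c: "coeff_mult sc pr R x \<in> Sp" .
    have "fsup x" unfolding x by (rule fsup_diff) simp_all
    moreover have "coeff_mult sc pr R x \<in> F.span (coeff_rel sc Dop)" using c unfolding Sp_def .
    ultimately show ?case by simp
  qed
  then show ?thesis by simp
qed

lemma ceq_fsup: "R1 \<approx> R2 \<Longrightarrow> fsup R2 \<Longrightarrow> fsup R1"
proof -
  assume "R1 \<approx> R2" "fsup R2"
  then have "fsup (R1 - R2)" "fsup R2" by (auto simp: ceq_def' intro: Sp_fsup)
  then have "fsup ((R1 - R2) + R2)" by (rule fsup_add)
  then show ?thesis by simp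
qed

lemma ceq_cm:
  assumes "R1 \<approx> R1'" "R2 \<approx> R2'" "fsup R1'" "fsup R2'"
  shows "coeff_mult sc pr R1 R2 \<approx> coeff_mult sc pr R1' R2'"
proof -
  have f: "fsup R1" "fsup R2" using assms ceq_fsup by blast+
  have "coeff_mult sc pr R1 R2 - coeff_mult sc pr R1' R2 = coeff_mult sc pr (R1 - R1') R2"
    using f assms by (simp add: cm_diff_l)
  moreover have "coeff_mult sc pr (R1 - R1') R2 \<in> Sp"
    using assms(1) f by (intro cm_Sp_l) (auto simp: ceq_def')
  ultimately have 1: "coeff_mult sc pr R1 R2 \<approx> coeff_mult sc pr R1' R2" by (simp add: ceq_def')
  have "coeff_mult sc pr R1' R2 - coeff_mult sc pr R1' R2' = coeff_mult sc pr R1' (R2 - R2')"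
    using f assms by (simp add: cm_diff_r)
  moreover have "coeff_mult sc pr R1' (R2 - R2') \<in> Sp"
    using assms(2,3) by (intro cm_Sp_r) (auto simp: ceq_def')
  ultimately have 2: "coeff_mult sc pr R1' R2 \<approx> coeff_mult sc pr R1' R2'" by (simp add: ceq_def')
  from 1 2 show ?thesis by (rule ceq_trans)
qed

end

lemma leaves_pos: "leaves t > 0"
  by (induct t) auto

context CA begin

lemma tmon_fsup:
  "length us = leaves tr \<Longrightarrow> (\<forall>u\<in>set us. fsup u) \<Longrightarrow> fsup (tmon sc pr tr us)"
proof (induct tr arbitrary: us)
  case Leaf
  then show ?case by (cases us) auto
next
  case (Node l r)
  show ?case
    using Node.prems by (simp, intro cm_fsup Node.hyps) (auto dest: in_set_takeD in_set_dropD)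
qed

lemma tmon_slot:
  assumes "length us = leaves tr" "i < length us" "\<forall>u\<in>set us. fsup u" "\<And>p. p \<in> S \<Longrightarrow> fsup (v p)"
  shows "tmon sc pr tr (us[i := (\<Sum>p\<in>S. vsc (c p) (v p))]) = (\<Sum>p\<in>S. vsc (c p) (tmon sc pr tr (us[i := v p])))"
  using assms
proof (induct tr arbitrary: us i)
  case Leaf
  then obtain u where "us = [u]" by (cases us) auto
  with Leaf show ?case by simp
next
  case (Node l r)
  let ?n = "leaves l"
  have fsX: "fsup (\<Sum>p\<in>S. vsc (c p) (v p))" using Node.prems by (auto intro!: fsup_sum fsup_vsc)
  have setupd: "\<forall>u\<in>set (us[i := w]). fsup u" if "fsup w" for w
    using Node.prems that by (auto dest!: set_update_subset_insert[THEN subsetD])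
  show ?case
  proof (cases "i < ?n")
    case True
    have tk: "take ?n (us[i := w]) = (take ?n us)[i := w]" for w by (simp add: take_update_swap)
    have dr: "drop ?n (us[i := w]) = drop ?n us" for w using True by simp
    have fR: "fsup (tmon sc pr r (drop ?n us))"
      using Node.prems by (intro tmon_fsup) (auto dest: in_set_dropD)
    have "tmon sc pr (Node l r) (us[i := (\<Sum>p\<in>S. vsc (c p) (v p))])
       = coeff_mult sc pr (\<Sum>p\<in>S. vsc (c p) (tmon sc pr l ((take ?n us)[i := v p]))) (tmon sc pr r (drop ?n us))"
      unfolding tmon.simps tk dr using Node.prems True
      by (subst Node.hyps(1)) (auto dest: in_set_takeD)
    also have "\<dots> = (\<Sum>p\<in>S. vsc (c p) (coeff_mult sc pr (tmon sc pr l ((take ?n us)[i := v p])) (tmon sc pr r (drop ?n us))))"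
    proof -
      have f: "fsup (tmon sc pr l ((take ?n us)[i := v p]))" if "p \<in> S" for p
        using Node.prems that by (intro tmon_fsup) (auto dest!: set_update_subset_insert[THEN subsetD] in_set_takeD)
      show ?thesis using f fR by (simp add: cm_sum_l fsup_vsc cm_vsc_l)
    qed
    also have "\<dots> = (\<Sum>p\<in>S. vsc (c p) (tmon sc pr (Node l r) (us[i := v p])))"
      unfolding tmon.simps tk dr ..
    finally show ?thesis .
  next
    case False
    have tk: "take ?n (us[i := w]) = take ?n us" for w using False by simp
    have dr: "drop ?n (us[i := w]) = (drop ?n us)[i - ?n := w]" for w using False by (simp add: drop_update_swap)
    have fL: "fsup (tmon sc pr l (take ?n us))"
      using Node.prems by (intro tmon_fsup) (auto dest: in_set_takeD)
    have "tmon sc pr (Node l r) (us[i := (\<Sum>p\<in>S. vsc (c p) (v p))])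
       = coeff_mult sc pr (tmon sc pr l (take ?n us)) (\<Sum>p\<in>S. vsc (c p) (tmon sc pr r ((drop ?n us)[i - ?n := v p])))"
      unfolding tmon.simps tk dr using Node.prems False
      by (subst Node.hyps(2)) (auto dest: in_set_dropD)
    also have "\<dots> = (\<Sum>p\<in>S. vsc (c p) (coeff_mult sc pr (tmon sc pr l (take ?n us)) (tmon sc pr r ((drop ?n us)[i - ?n := v p]))))"
    proof -
      have f: "fsup (tmon sc pr r ((drop ?n us)[i - ?n := v p]))" if "p \<in> S" for p
        using Node.prems that by (intro tmon_fsup) (auto dest!: set_update_subset_insert[THEN subsetD] in_set_dropD)
      show ?thesis using f fL by (simp add: cm_sum_r fsup_vsc cm_vsc_r)
    qed
    also have "\<dots> = (\<Sum>p\<in>S. vsc (c p) (tmon sc pr (Node l r) (us[i := v p])))"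
      unfolding tmon.simps tk dr ..
    finally show ?thesis .
  qed
qed

end

definition comps :: "nat \<Rightarrow> nat \<Rightarrow> nat list set" where
  "comps n s = {j. length j = n \<and> sum_list j = s}"

lemma comps_sub: "comps n s \<subseteq> {xs. set xs \<subseteq> {..s} \<and> length xs = n}"
  unfolding comps_def by (auto simp: member_le_sum_list)

lemma finite_comps[simp]: "finite (comps n s)"
  by (rule finite_subset[OF comps_sub]) (simp add: finite_lists_length_eq)

lemma comps_0[simp]: "comps 0 s = (if s = 0 then {[]} else {})"
  by (auto simp: comps_def)

lemma comps_Suc: "comps (Suc n) s = (\<lambda>(x, j). x # j) ` (SIGMA x:{..s}. comps n (s - x))"
proof (rule set_eqI)
  fix l
  show "l \<in> comps (Suc n) s \<longleftrightarrow> l \<in> (\<lambda>(x, j). x # j) ` (SIGMA x:{..s}. comps n (s - x))"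
  proof
    assume "l \<in> comps (Suc n) s"
    then obtain x j where l: "l = x # j" "length j = n" "x + sum_list j = s"
      by (cases l) (auto simp: comps_def)
    then show "l \<in> (\<lambda>(x, j). x # j) ` (SIGMA x:{..s}. comps n (s - x))"
      by (auto simp: comps_def image_iff intro!: bexI[of _ "(x, j)"])
  qed (auto simp: comps_def)
qed

lemma sum_comps_Suc:
  "(\<Sum>j\<in>comps (Suc n) s. f j) = (\<Sum>x\<le>s. \<Sum>j\<in>comps n (s - x). f (x # j))"
proof -
  have inj: "inj_on (\<lambda>(x, j). x # j) (SIGMA x:{..s}. comps n (s - x))"
    by (auto simp: inj_on_def)
  show ?thesis
    unfolding comps_Suc sum.reindex[OF inj] by (simp add: sum.Sigma split_def)
qed

lemma vandermonde_list:
  "(\<Sum>j\<in>comps (length qs) s. prod_list (map2 (gchoose) qs j)) = (sum_list qs gchoose s :: 'k::field_char_0)"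
proof (induct qs arbitrary: s)
  case Nil
  then show ?case by (simp add: gbinomial_0_left)
next
  case (Cons q qs)
  have "(\<Sum>j\<in>comps (length (q # qs)) s. prod_list (map2 (gchoose) (q # qs) j))
      = (\<Sum>x\<le>s. (q gchoose x) * (sum_list qs gchoose (s - x)))"
    by (simp add: sum_comps_Suc sum_distrib_left[symmetric] Cons)
  also have "\<dots> = (q + sum_list qs) gchoose s"
    using gbinomial_Vandermonde[of q "sum_list qs" s] by (simp add: atLeast0AtMost)
  finally show ?case by simp
qed

fun evw :: "int list \<Rightarrow> nat list \<Rightarrow> 'k::field_char_0" where
  "evw (p # ps) (a # as) = fw (of_int p) a * evw ps as"
| "evw _ _ = 1"

lemma evw_append: "length as1 = length ps1 \<Longrightarrow> evw (ps1 @ ps2) (as1 @ as2) = (evw ps1 as1 * evw ps2 as2 :: 'k::field_char_0)"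
proof (induct ps1 arbitrary: as1)
  case Nil then show ?case by simp
next
  case (Cons p ps1) then show ?case by (cases as1) auto
qed

lemma fw_add: "fw x (a + j) = fw x a * ((-1) ^ j * fact j * ((x - of_nat a) gchoose j))"
proof -
  have t: "(x gchoose (a + j)) * (of_nat (a + j) gchoose a) = (x gchoose a) * ((x - of_nat a) gchoose (a + j - a))"
    by (rule gbinomial_trinomial_revision) simp
  have b: "(of_nat (a + j) gchoose a :: 'a) = of_nat ((a + j) choose a)"
    by (simp add: binomial_gbinomial)
  have f: "fact a * fact j * of_nat ((a + j) choose a) = (fact (a + j) :: 'a)"
    using binomial_fact_lemma[of a "a + j"] by (metis add_diff_cancel_left' le_add1 of_nat_fact of_nat_mult)
  have "fact (a + j) * (x gchoose (a + j)) = fact a * fact j * ((x gchoose (a + j)) * (of_nat (a + j) gchoose a))"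
    using f b by (simp add: mult_ac)
  also have "\<dots> = fact a * fact j * (x gchoose a) * ((x - of_nat a) gchoose j)"
    using t by (simp add: mult_ac)
  finally have e: "fact (a + j) * (x gchoose (a + j)) = fact a * fact j * (x gchoose a) * ((x - of_nat a) gchoose j)" .
  show ?thesis unfolding fw_def power_add
    using e by (simp add: mult_ac)
qed

lemma evw_add:
  "length \<alpha> = length ps \<Longrightarrow> length j = length ps \<Longrightarrow>
   evw ps (map2 (+) \<alpha> j) = (evw ps \<alpha> :: 'k::field_char_0) * ((-1) ^ sum_list j * prod_list (map fact j)
      * prod_list (map2 (gchoose) (map2 (\<lambda>p a. of_int p - of_nat a) ps \<alpha>) j))"
proof (induct ps arbitrary: \<alpha> j)
  case Nil then show ?case by simp
next
  case (Cons p ps)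
  then obtain a as x xs where "\<alpha> = a # as" "j = x # xs" by (cases \<alpha>; cases j) auto
  with Cons show ?case by (simp add: fw_add power_add mult_ac)
qed

lemma sum_list_map2_minus:
  "length \<alpha> = length ps \<Longrightarrow> sum_list (map2 (\<lambda>p a. of_int p - of_nat a) ps \<alpha>) = (of_int (sum_list ps - int (sum_list \<alpha>)) :: 'k::field_char_0)"
proof (induct ps arbitrary: \<alpha>)
  case Nil then show ?case by simp
next
  case (Cons p ps) then show ?case by (cases \<alpha>) auto
qed

lemma evw_vandermonde:
  assumes "length \<alpha> = length ps"
  shows "(\<Sum>j\<in>comps (length ps) s. evw ps (map2 (+) \<alpha> j) * ((-1) ^ s / prod_list (map fact j)))
     = (evw ps \<alpha> :: 'k::field_char_0) * (of_int (sum_list ps - int (sum_list \<alpha>)) gchoose s)"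
proof -
  let ?qs = "map2 (\<lambda>p a. of_int p - of_nat a) ps \<alpha> :: 'k list"
  have lq: "length ?qs = length ps" using assms by simp
  have "(\<Sum>j\<in>comps (length ps) s. evw ps (map2 (+) \<alpha> j) * ((-1) ^ s / prod_list (map fact j)))
      = (\<Sum>j\<in>comps (length ps) s. evw ps \<alpha> * prod_list (map2 (gchoose) ?qs j))"
  proof (rule sum.cong)
    fix j assume "j \<in> comps (length ps) s"
    then have j: "length j = length ps" "sum_list j = s" by (auto simp: comps_def)
    have nz: "prod_list (map fact j) \<noteq> (0::'k)" by (auto simp: prod_list_zero_iff)
    have pm: "((-1::'k) ^ s) * (-1) ^ s = 1" by (simp add: power_mult_distrib[symmetric])
    show "evw ps (map2 (+) \<alpha> j) * ((-1) ^ s / prod_list (map fact j)) = evw ps \<alpha> * prod_list (map2 (gchoose) ?qs j)"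
      using nz pm by (simp add: evw_add[OF assms j(1)] j(2) field_simps)
  qed simp
  also have "\<dots> = evw ps \<alpha> * (sum_list ?qs gchoose s)"
    using vandermonde_list[of ?qs s] unfolding lq by (simp add: sum_distrib_left[symmetric])
  finally show ?thesis unfolding sum_list_map2_minus[OF assms] .
qed

definition single :: "nat list \<Rightarrow> 'c::zero \<Rightarrow> nat list \<Rightarrow> 'c" where
  "single \<alpha> c = (\<lambda>\<beta>. if \<beta> = \<alpha> then c else 0)"

definition fsn :: "nat \<Rightarrow> (nat list \<Rightarrow> 'c::zero) \<Rightarrow> bool" where
  "fsn n A \<longleftrightarrow> finite {\<alpha>. A \<alpha> \<noteq> 0} \<and> (\<forall>\<alpha>. A \<alpha> \<noteq> 0 \<longrightarrow> length \<alpha> = n)"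

lemma decomp:
  assumes "finite {\<alpha>. A \<alpha> \<noteq> 0}"
  shows "A = (\<Sum>\<alpha>\<in>{\<alpha>. A \<alpha> \<noteq> 0}. single \<alpha> (A \<alpha>))"
proof
  fix \<beta>
  have "(\<Sum>\<alpha>\<in>{\<alpha>. A \<alpha> \<noteq> 0}. single \<alpha> (A \<alpha>)) \<beta> = (\<Sum>\<alpha>\<in>{\<alpha>. A \<alpha> \<noteq> 0}. if \<beta> = \<alpha> then A \<alpha> else 0)"
    by (simp add: sum_fun_apply single_def)
  also have "\<dots> = A \<beta>" using assms by (simp add: sum.delta)
  finally show "A \<beta> = (\<Sum>\<alpha>\<in>{\<alpha>. A \<alpha> \<noteq> 0}. single \<alpha> (A \<alpha>)) \<beta>" by simp
qed

lemma fsn_single: "length \<alpha> = n \<Longrightarrow> fsn n (single \<alpha> c)"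
  unfolding fsn_def single_def by (rule conjI, rule finite_subset[of _ "{\<alpha>}"]) auto

lemma fsn_sum: "finite I \<Longrightarrow> (\<And>i. i \<in> I \<Longrightarrow> fsn n (A i)) \<Longrightarrow> fsn n (\<Sum>i\<in>I. A i)"
proof (induct I rule: finite_induct)
  case empty then show ?case by (simp add: fsn_def)
next
  case (insert x F)
  have h1: "fsn n (A x)" "fsn n (\<Sum>i\<in>F. A i)" using insert by auto
  have fin: "finite {\<alpha>. (A x + (\<Sum>i\<in>F. A i)) \<alpha> \<noteq> 0}"
    by (rule finite_subset[of _ "{\<alpha>. A x \<alpha> \<noteq> 0} \<union> {\<alpha>. (\<Sum>i\<in>F. A i) \<alpha> \<noteq> 0}"])
      (use h1 in \<open>auto simp: fsn_def\<close>)
  have "\<forall>\<alpha>. (A x + (\<Sum>i\<in>F. A i)) \<alpha> \<noteq> 0 \<longrightarrow> length \<alpha> = n"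
  proof (intro allI impI)
    fix \<alpha> assume "(A x + (\<Sum>i\<in>F. A i)) \<alpha> \<noteq> 0"
    then have "A x \<alpha> \<noteq> 0 \<or> (\<Sum>i\<in>F. A i) \<alpha> \<noteq> 0" by auto
    then show "length \<alpha> = n" using h1 unfolding fsn_def by blast
  qed
  with fin have "fsn n (A x + (\<Sum>i\<in>F. A i))" by (simp add: fsn_def)
  then show ?case unfolding sum.insert[OF insert(1,2)] .
qed

lemma finite_below: "finite {\<alpha>. length \<alpha> = n \<and> list_all2 (\<le>) \<alpha> (t::nat list)}"
proof (rule finite_subset[of _ "{xs. set xs \<subseteq> {..sum_list t} \<and> length xs = n}"])
  show "{\<alpha>. length \<alpha> = n \<and> list_all2 (\<le>) \<alpha> t} \<subseteq> {xs. set xs \<subseteq> {..sum_list t} \<and> length xs = n}"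
  proof (clarify, intro conjI subsetI)
    fix \<alpha> x assume a: "list_all2 (\<le>) \<alpha> t" "x \<in> set \<alpha>"
    then obtain i where i: "i < length \<alpha>" "\<alpha> ! i = x" by (auto simp: in_set_conv_nth)
    have "\<alpha> ! i \<le> t ! i" "length \<alpha> = length t" using a(1) i(1) by (auto simp: list_all2_conv_all_nth)
    moreover have "t ! i \<le> sum_list t" using i(1) \<open>length \<alpha> = length t\<close> by (auto intro: elem_le_sum_list)
    ultimately show "x \<in> {..sum_list t}" using i by auto
  qed auto
qed (simp add: finite_lists_length_eq)

context CA begin

definition evm :: "int list \<Rightarrow> (nat list \<Rightarrow> 'c) \<Rightarrow> int \<Rightarrow> 'c" where
  "evm ps A = (\<Sum>\<alpha>\<in>{\<alpha>. length \<alpha> = length ps \<and> A \<alpha> \<noteq> 0}.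
      mon (sum_list ps - int (sum_list \<alpha>)) (sc (evw ps \<alpha>) (A \<alpha>)))"

lemma evm_superset:
  assumes "finite S" "S \<subseteq> {\<alpha>. length \<alpha> = length ps}" "{\<alpha>. length \<alpha> = length ps \<and> A \<alpha> \<noteq> 0} \<subseteq> S"
  shows "evm ps A = (\<Sum>\<alpha>\<in>S. mon (sum_list ps - int (sum_list \<alpha>)) (sc (evw ps \<alpha>) (A \<alpha>)))"
  unfolding evm_def using assms by (intro sum.mono_neutral_left) auto

lemma evm_fsup: "fsup (evm ps A)"
  unfolding evm_def by (intro fsup_sum) simp

lemma evm_single: "length \<alpha> = length ps \<Longrightarrow>
   evm ps (single \<alpha> c) = mon (sum_list ps - int (sum_list \<alpha>)) (sc (evw ps \<alpha>) c)"
  by (subst evm_superset[of "{\<alpha>}"]) (auto simp: single_def)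

lemma evm_sum:
  assumes "finite I" "\<And>i. i \<in> I \<Longrightarrow> fsn (length ps) (A i)"
  shows "evm ps (\<Sum>i\<in>I. A i) = (\<Sum>i\<in>I. evm ps (A i))"
proof -
  let ?S = "\<Union>i\<in>I. {\<alpha>. A i \<alpha> \<noteq> 0}"
  have fS: "finite ?S" using assms by (auto simp: fsn_def)
  have Sl: "?S \<subseteq> {\<alpha>. length \<alpha> = length ps}" using assms by (auto simp: fsn_def)
  let ?f = "\<lambda>\<alpha> x. mon (sum_list ps - int (sum_list \<alpha>)) (sc (evw ps \<alpha>) x)"
  have "evm ps (\<Sum>i\<in>I. A i) = (\<Sum>\<alpha>\<in>?S. ?f \<alpha> ((\<Sum>i\<in>I. A i) \<alpha>))"
  proof (rule evm_superset[OF fS Sl])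
    show "{\<alpha>. length \<alpha> = length ps \<and> (\<Sum>i\<in>I. A i) \<alpha> \<noteq> 0} \<subseteq> ?S"
    proof
      fix \<alpha> assume "\<alpha> \<in> {\<alpha>. length \<alpha> = length ps \<and> (\<Sum>i\<in>I. A i) \<alpha> \<noteq> 0}"
      then have "(\<Sum>i\<in>I. A i \<alpha>) \<noteq> 0" by (simp add: sum_fun_apply)
      then obtain i where "i \<in> I" "A i \<alpha> \<noteq> 0" by (meson sum.neutral)
      then show "\<alpha> \<in> ?S" by blast
    qed
  qed
  also have "\<dots> = (\<Sum>\<alpha>\<in>?S. \<Sum>i\<in>I. ?f \<alpha> (A i \<alpha>))"
    by (simp add: sum_fun_apply V.scale_sum_right mon_sum)
  also have "\<dots> = (\<Sum>i\<in>I. \<Sum>\<alpha>\<in>?S. ?f \<alpha> (A i \<alpha>))" by (rule sum.swap)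
  also have "\<dots> = (\<Sum>i\<in>I. evm ps (A i))"
  proof (rule sum.cong)
    fix i assume "i \<in> I"
    then show "(\<Sum>\<alpha>\<in>?S. ?f \<alpha> (A i \<alpha>)) = evm ps (A i)"
      by (intro evm_superset[OF fS Sl, symmetric]) auto
  qed simp
  finally show ?thesis .
qed

lemma evm_decomp:
  assumes "fsn (length ps) A"
  shows "evm ps A = (\<Sum>\<alpha>\<in>{\<alpha>. A \<alpha> \<noteq> 0}. evm ps (single \<alpha> (A \<alpha>)))"
proof -
  have f: "finite {\<alpha>. A \<alpha> \<noteq> 0}" using assms by (simp add: fsn_def)
  have "evm ps A = evm ps (\<Sum>\<alpha>\<in>{\<alpha>. A \<alpha> \<noteq> 0}. single \<alpha> (A \<alpha>))"
    by (subst decomp[OF f]) (rule refl)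
  also have "\<dots> = (\<Sum>\<alpha>\<in>{\<alpha>. A \<alpha> \<noteq> 0}. evm ps (single \<alpha> (A \<alpha>)))"
  proof (rule evm_sum[OF f])
    fix \<alpha> assume "\<alpha> \<in> {\<alpha>. A \<alpha> \<noteq> 0}"
    then have "length \<alpha> = length ps" using assms by (auto simp: fsn_def)
    then show "fsn (length ps) (single \<alpha> (A \<alpha>))" by (rule fsn_single)
  qed
  finally show ?thesis .
qed

lemma pp_sum_l:
  "pseudoprod sc pr n m (\<Sum>i\<in>I. A i) B = (\<Sum>i\<in>I. pseudoprod sc pr n m (A i) B)"
proof
  fix \<gamma>
  show "pseudoprod sc pr n m (\<Sum>i\<in>I. A i) B \<gamma> = (\<Sum>i\<in>I. pseudoprod sc pr n m (A i) B) \<gamma>"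
    unfolding pseudoprod_def Let_def sum_fun_apply
    by (simp add: pr_sum_l V.scale_sum_right sum_fun_apply) (rule impI, rule sum.swap)
qed

lemma pp_sum_r:
  "pseudoprod sc pr n m A (\<Sum>i\<in>I. B i) = (\<Sum>i\<in>I. pseudoprod sc pr n m A (B i))"
proof
  fix \<gamma>
  show "pseudoprod sc pr n m A (\<Sum>i\<in>I. B i) \<gamma> = (\<Sum>i\<in>I. pseudoprod sc pr n m A (B i)) \<gamma>"
    unfolding pseudoprod_def Let_def sum_fun_apply
    by (simp add: pr_sum_r V.scale_sum_right sum_fun_apply) (rule impI, rule sum.swap)
qed

lemma pp_single:
  "pseudoprod sc pr n m (single \<alpha> a) (single \<beta> b) \<gamma> =
    (if length \<gamma> = n + m \<and> length \<alpha> = n \<and> list_all2 (\<le>) \<alpha> (take n \<gamma>) \<and> drop n \<gamma> = \<beta>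
     then sc ((-1) ^ sum_list (map2 (-) (take n \<gamma>) \<alpha>) / prod_list (map fact (map2 (-) (take n \<gamma>) \<alpha>)))
          (pr (sum_list (map2 (-) (take n \<gamma>) \<alpha>)) a b) else 0)"
proof (cases "length \<gamma> = n + m")
  case True
  let ?T = "\<lambda>\<alpha>'. sc ((-1) ^ sum_list (map2 (-) (take n \<gamma>) \<alpha>') / prod_list (map fact (map2 (-) (take n \<gamma>) \<alpha>')))
          (pr (sum_list (map2 (-) (take n \<gamma>) \<alpha>')) a b)"
  have "pseudoprod sc pr n m (single \<alpha> a) (single \<beta> b) \<gamma> =
     (\<Sum>\<alpha>'\<in>{\<alpha>. length \<alpha> = n \<and> list_all2 (\<le>) \<alpha> (take n \<gamma>)}. if \<alpha>' = \<alpha> then (if drop n \<gamma> = \<beta> then ?T \<alpha>' else 0) else 0)"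
  proof -
    have "pseudoprod sc pr n m (single \<alpha> a) (single \<beta> b) \<gamma> =
      (\<Sum>\<alpha>'\<in>{\<alpha>. length \<alpha> = n \<and> list_all2 (\<le>) \<alpha> (take n \<gamma>)}.
        sc ((-1) ^ sum_list (map2 (-) (take n \<gamma>) \<alpha>') / prod_list (map fact (map2 (-) (take n \<gamma>) \<alpha>')))
          (pr (sum_list (map2 (-) (take n \<gamma>) \<alpha>')) (single \<alpha> a \<alpha>') (single \<beta> b (drop n \<gamma>))))"
      unfolding pseudoprod_def Let_def using True by simp
    also have "\<dots> = (\<Sum>\<alpha>'\<in>{\<alpha>. length \<alpha> = n \<and> list_all2 (\<le>) \<alpha> (take n \<gamma>)}. if \<alpha>' = \<alpha> then (if drop n \<gamma> = \<beta> then ?T \<alpha>' else 0) else 0)"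
      by (rule sum.cong) (auto simp: single_def)
    finally show ?thesis .
  qed
  also have "\<dots> = (if \<alpha> \<in> {\<alpha>. length \<alpha> = n \<and> list_all2 (\<le>) \<alpha> (take n \<gamma>)} then (if drop n \<gamma> = \<beta> then ?T \<alpha> else 0) else 0)"
    by (rule sum.delta[OF finite_below])
  finally show ?thesis using True by auto
next
  case False
  then show ?thesis by (simp add: pseudoprod_def)
qed

end

lemma sum_list_map2_plus: "length \<alpha> = length j \<Longrightarrow> sum_list (map2 (+) \<alpha> j) = sum_list \<alpha> + (sum_list j :: nat)"
proof (induct \<alpha> arbitrary: j)
  case Nil then show ?case by simp
next
  case (Cons a as) then show ?case by (cases j) auto
qed

lemma map2_plus_minus: "length \<alpha> = length j \<Longrightarrow> map2 (-) (map2 (+) \<alpha> j) \<alpha> = (j::nat list)"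
  by (auto simp: list_eq_iff_nth_eq)

lemma le_map2_plus: "length \<alpha> = length j \<Longrightarrow> list_all2 (\<le>) \<alpha> (map2 (+) \<alpha> (j::nat list))"
  by (auto simp: list_all2_conv_all_nth)

lemma map2_plus_inj: "length \<alpha> = length j1 \<Longrightarrow> length \<alpha> = length j2 \<Longrightarrow> map2 (+) \<alpha> j1 = map2 (+) \<alpha> (j2::nat list) \<Longrightarrow> j1 = j2"
  by (metis map2_plus_minus)

lemma map2_plus_minus': "list_all2 (\<le>) \<alpha> t \<Longrightarrow> map2 (+) \<alpha> (map2 (-) t \<alpha>) = (t::nat list)"
  by (auto simp: list_all2_conv_all_nth list_eq_iff_nth_eq)

context CA begin

lemma evm_pp_single:
  assumes len: "length ps = n + m" "length \<alpha> = n" "length \<beta> = m"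
  shows "evm ps (pseudoprod sc pr n m (single \<alpha> a) (single \<beta> b)) =
     coeff_mult sc pr (evm (take n ps) (single \<alpha> a)) (evm (drop n ps) (single \<beta> b))"
proof -
  obtain N where N: "\<forall>s\<ge>N. pr s a b = 0" using loc by blast
  define J where "J = {j. length j = n \<and> sum_list j < N}"
  define g where "g j = map2 (+) \<alpha> j @ \<beta>" for j
  define PP where "PP = pseudoprod sc pr n m (single \<alpha> a) (single \<beta> b)"
  define c where "c j = ((-1::'k) ^ sum_list j / prod_list (map fact j))" for j
  define ps1 where "ps1 = take n ps"
  define ps2 where "ps2 = drop n ps"
  define w1 where "w1 = (evw ps1 \<alpha> :: 'k)"
  define w2 where "w2 = (evw ps2 \<beta> :: 'k)"
  define E where "E = sum_list ps - int (sum_list \<alpha>) - int (sum_list \<beta>)"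
  have lps1: "length ps1 = n" using len by (simp add: ps1_def)
  have ps12: "ps = ps1 @ ps2" by (simp add: ps1_def ps2_def)
  have J_eq: "J = (\<Union>s\<in>{..<N}. comps n s)" by (auto simp: J_def comps_def)
  have fJ: "finite J" unfolding J_eq by auto
  have inj: "inj_on g J"
  proof (rule inj_onI)
    fix j1 j2 assume "j1 \<in> J" "j2 \<in> J" "g j1 = g j2"
    then have "map2 (+) \<alpha> j1 = map2 (+) \<alpha> j2" "length j1 = n" "length j2 = n"
      using len by (auto simp: g_def J_def)
    then show "j1 = j2" using len map2_plus_inj by metis
  qed
  have PPg: "PP (g j) = sc (c j) (pr (sum_list j) a b)" if "length j = n" for j
    using that len
    by (simp add: PP_def pp_single g_def c_def map2_plus_minus le_map2_plus del: map_map)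
  have supp: "{\<gamma>. length \<gamma> = length ps \<and> PP \<gamma> \<noteq> 0} \<subseteq> g ` J"
  proof
    fix \<gamma> assume "\<gamma> \<in> {\<gamma>. length \<gamma> = length ps \<and> PP \<gamma> \<noteq> 0}"
    then have h: "length \<gamma> = n + m" "list_all2 (\<le>) \<alpha> (take n \<gamma>)" "drop n \<gamma> = \<beta>"
        "pr (sum_list (map2 (-) (take n \<gamma>) \<alpha>)) a b \<noteq> 0"
      unfolding PP_def pp_single by (auto split: if_splits)
    let ?j = "map2 (-) (take n \<gamma>) \<alpha>"
    have "sum_list ?j < N" using N h(4) by (meson not_less)
    moreover have "length ?j = n" using h len by simp
    moreover have "g ?j = \<gamma>"
      unfolding g_def using map2_plus_minus'[OF h(2)] h(3) by (metis append_take_drop_id)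
    ultimately show "\<gamma> \<in> g ` J" unfolding J_def by force
  qed
  have gl: "g ` J \<subseteq> {\<gamma>. length \<gamma> = length ps}" using len by (auto simp: g_def J_def)
  have "evm ps PP = (\<Sum>\<gamma>\<in>g ` J. mon (sum_list ps - int (sum_list \<gamma>)) (sc (evw ps \<gamma>) (PP \<gamma>)))"
    by (rule evm_superset[OF finite_imageI[OF fJ] gl supp])
  also have "\<dots> = (\<Sum>j\<in>J. mon (sum_list ps - int (sum_list (g j))) (sc (evw ps (g j)) (PP (g j))))"
    by (rule sum.reindex[OF inj, unfolded comp_def])
  also have "\<dots> = (\<Sum>j\<in>J. mon (E - int (sum_list j)) (sc (evw ps1 (map2 (+) \<alpha> j) * w2 * c j) (pr (sum_list j) a b)))"
  proof (rule sum.cong)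
    fix j assume "j \<in> J"
    then have lj: "length j = n" by (simp add: J_def)
    have e1: "sum_list (g j) = sum_list \<alpha> + sum_list j + sum_list \<beta>"
      using lj len by (simp add: g_def sum_list_map2_plus)
    have e2: "evw ps (g j) = evw ps1 (map2 (+) \<alpha> j) * w2"
      unfolding g_def ps12 w2_def using lj len lps1 by (subst evw_append) simp_all
    show "mon (sum_list ps - int (sum_list (g j))) (sc (evw ps (g j)) (PP (g j))) =
        mon (E - int (sum_list j)) (sc (evw ps1 (map2 (+) \<alpha> j) * w2 * c j) (pr (sum_list j) a b))"
      unfolding e1 e2 PPg[OF lj] E_def by (simp add: algebra_simps)
  qed simp
  also have "\<dots> = (\<Sum>s<N. \<Sum>j\<in>comps n s. mon (E - int (sum_list j)) (sc (evw ps1 (map2 (+) \<alpha> j) * w2 * c j) (pr (sum_list j) a b)))"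
    unfolding J_eq by (rule sum.UNION_disjoint) (auto simp: comps_def[symmetric], auto simp: comps_def)
  also have "\<dots> = (\<Sum>s<N. mon (E - int s) (sc ((\<Sum>j\<in>comps n s. evw ps1 (map2 (+) \<alpha> j) * ((-1) ^ s / prod_list (map fact j))) * w2) (pr s a b)))"
  proof (rule sum.cong)
    fix s
    have "(\<Sum>j\<in>comps n s. mon (E - int (sum_list j)) (sc (evw ps1 (map2 (+) \<alpha> j) * w2 * c j) (pr (sum_list j) a b)))
       = (\<Sum>j\<in>comps n s. mon (E - int s) (sc (evw ps1 (map2 (+) \<alpha> j) * ((-1) ^ s / prod_list (map fact j)) * w2) (pr s a b)))"
      by (rule sum.cong) (auto simp: comps_def c_def mult_ac)
    also have "\<dots> = mon (E - int s) (sc ((\<Sum>j\<in>comps n s. evw ps1 (map2 (+) \<alpha> j) * ((-1) ^ s / prod_list (map fact j))) * w2) (pr s a b))"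
      by (simp add: mon_sum[symmetric] V.scale_sum_left[symmetric] sum_distrib_right)
    finally show "(\<Sum>j\<in>comps n s. mon (E - int (sum_list j)) (sc (evw ps1 (map2 (+) \<alpha> j) * w2 * c j) (pr (sum_list j) a b))) = \<dots>" .
  qed simp
  also have "\<dots> = (\<Sum>s<N. mon (E - int s) (sc (w1 * (of_int (sum_list ps1 - int (sum_list \<alpha>)) gchoose s) * w2) (pr s a b)))"
  proof (rule sum.cong)
    fix s
    have "(\<Sum>j\<in>comps n s. evw ps1 (map2 (+) \<alpha> j) * ((-1) ^ s / prod_list (map fact j))) =
       w1 * (of_int (sum_list ps1 - int (sum_list \<alpha>)) gchoose s)"
      using evw_vandermonde[of \<alpha> ps1 s] len lps1 unfolding w1_def by simp
    then show "mon (E - int s) (sc ((\<Sum>j\<in>comps n s. evw ps1 (map2 (+) \<alpha> j) * ((-1) ^ s / prod_list (map fact j))) * w2) (pr s a b))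
      = mon (E - int s) (sc (w1 * (of_int (sum_list ps1 - int (sum_list \<alpha>)) gchoose s) * w2) (pr s a b))"
      by (simp only:)
  qed simp
  also have "\<dots> = cmm (sum_list ps1 - int (sum_list \<alpha>)) (sc w1 a) (sum_list ps2 - int (sum_list \<beta>)) (sc w2 b)"
  proof -
    have N': "\<forall>s\<ge>N. pr s (sc w1 a) (sc w2 b) = 0" using N by (simp add: pr_sc_l pr_sc_r)
    have eE: "E = sum_list ps1 - int (sum_list \<alpha>) + (sum_list ps2 - int (sum_list \<beta>))"
      unfolding E_def ps12 by simp
    show ?thesis unfolding cmm_sum[OF N'] eE
      by (rule sum.cong) (simp_all add: pr_sc_l pr_sc_r mult_ac)
  qed
  also have "\<dots> = coeff_mult sc pr (evm ps1 (single \<alpha> a)) (evm ps2 (single \<beta> b))"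
    using len lps1 by (simp add: evm_single ps2_def w1_def w2_def cm_mon)
  finally show ?thesis by (simp add: PP_def ps1_def ps2_def)
qed

end

context CA begin

lemma pp_single_fsn:
  assumes len: "length \<alpha> = n"
  shows "fsn (n + m) (pseudoprod sc pr n m (single \<alpha> a) (single \<beta> b))"
proof -
  obtain N where N: "\<forall>s\<ge>N. pr s a b = 0" using loc by blast
  define J where "J = {j. length j = n \<and> sum_list j < N}"
  define g where "g j = map2 (+) \<alpha> j @ \<beta>" for j
  define PP where "PP = pseudoprod sc pr n m (single \<alpha> a) (single \<beta> b)"
  have fJ: "finite J"
    by (rule finite_subset[of _ "{xs. set xs \<subseteq> {..N} \<and> length xs = n}"])
      (auto simp: J_def finite_lists_length_eq dest!: member_le_sum_list)
  have supp: "{\<gamma>. PP \<gamma> \<noteq> 0} \<subseteq> g ` J"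
  proof
    fix \<gamma> assume "\<gamma> \<in> {\<gamma>. PP \<gamma> \<noteq> 0}"
    then have h: "length \<gamma> = n + m" "list_all2 (\<le>) \<alpha> (take n \<gamma>)" "drop n \<gamma> = \<beta>"
        "pr (sum_list (map2 (-) (take n \<gamma>) \<alpha>)) a b \<noteq> 0"
      unfolding PP_def pp_single by (auto split: if_splits)
    let ?j = "map2 (-) (take n \<gamma>) \<alpha>"
    have "sum_list ?j < N" using N h(4) by (meson not_less)
    moreover have "length ?j = n" using h len by simp
    moreover have "g ?j = \<gamma>"
      unfolding g_def using map2_plus_minus'[OF h(2)] h(3) by (metis append_take_drop_id)
    ultimately show "\<gamma> \<in> g ` J" unfolding J_def by force
  qed
  have "finite {\<gamma>. PP \<gamma> \<noteq> 0}" by (rule finite_subset[OF supp finite_imageI[OF fJ]])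
  moreover have "\<forall>\<gamma>. PP \<gamma> \<noteq> 0 \<longrightarrow> length \<gamma> = n + m"
    unfolding PP_def pp_single by auto
  ultimately show ?thesis by (simp add: fsn_def PP_def)
qed

lemma pp_decomp:
  assumes "fsn n A" "fsn m B"
  shows "pseudoprod sc pr n m A B = (\<Sum>\<alpha>\<in>{\<alpha>. A \<alpha> \<noteq> 0}. \<Sum>\<beta>\<in>{\<beta>. B \<beta> \<noteq> 0}.
     pseudoprod sc pr n m (single \<alpha> (A \<alpha>)) (single \<beta> (B \<beta>)))"
proof -
  have f: "finite {\<alpha>. A \<alpha> \<noteq> 0}" "finite {\<beta>. B \<beta> \<noteq> 0}" using assms by (auto simp: fsn_def)
  show ?thesis
    by (subst decomp[OF f(1)], subst decomp[OF f(2)]) (simp add: pp_sum_l pp_sum_r, rule sum.swap)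
qed

lemma pp_fsn:
  assumes "fsn n A" "fsn m B"
  shows "fsn (n + m) (pseudoprod sc pr n m A B)"
proof -
  have f: "finite {\<alpha>. A \<alpha> \<noteq> 0}" "finite {\<beta>. B \<beta> \<noteq> 0}" using assms by (auto simp: fsn_def)
  show ?thesis unfolding pp_decomp[OF assms]
    using assms f by (intro fsn_sum pp_single_fsn) (auto simp: fsn_def)
qed

lemma evm_pp:
  assumes A: "fsn n A" and B: "fsn m B" and len: "length ps = n + m"
  shows "evm ps (pseudoprod sc pr n m A B) = coeff_mult sc pr (evm (take n ps) A) (evm (drop n ps) B)"
proof -
  have f: "finite {\<alpha>. A \<alpha> \<noteq> 0}" "finite {\<beta>. B \<beta> \<noteq> 0}" using A B by (auto simp: fsn_def)
  have lA: "length \<alpha> = n" if "A \<alpha> \<noteq> 0" for \<alpha> using A that by (auto simp: fsn_def)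
  have lB: "length \<beta> = m" if "B \<beta> \<noteq> 0" for \<beta> using B that by (auto simp: fsn_def)
  have l1: "length (take n ps) = n" and l2: "length (drop n ps) = m" using len by auto
  have "evm ps (pseudoprod sc pr n m A B) = (\<Sum>\<alpha>\<in>{\<alpha>. A \<alpha> \<noteq> 0}. \<Sum>\<beta>\<in>{\<beta>. B \<beta> \<noteq> 0}.
      evm ps (pseudoprod sc pr n m (single \<alpha> (A \<alpha>)) (single \<beta> (B \<beta>))))"
  proof -
    have fs: "fsn (length ps) (pseudoprod sc pr n m (single \<alpha> (A \<alpha>)) (single \<beta> (B \<beta>)))"
      if "A \<alpha> \<noteq> 0" for \<alpha> \<beta> unfolding len using lA[OF that] by (rule pp_single_fsn)
    have "evm ps (pseudoprod sc pr n m A B) = (\<Sum>\<alpha>\<in>{\<alpha>. A \<alpha> \<noteq> 0}. evm ps (\<Sum>\<beta>\<in>{\<beta>. B \<beta> \<noteq> 0}.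
      pseudoprod sc pr n m (single \<alpha> (A \<alpha>)) (single \<beta> (B \<beta>))))"
      unfolding pp_decomp[OF A B] using fs f by (intro evm_sum fsn_sum) auto
    also have "\<dots> = (\<Sum>\<alpha>\<in>{\<alpha>. A \<alpha> \<noteq> 0}. \<Sum>\<beta>\<in>{\<beta>. B \<beta> \<noteq> 0}.
      evm ps (pseudoprod sc pr n m (single \<alpha> (A \<alpha>)) (single \<beta> (B \<beta>))))"
      using fs f by (intro sum.cong refl evm_sum) auto
    finally show ?thesis .
  qed
  also have "\<dots> = (\<Sum>\<alpha>\<in>{\<alpha>. A \<alpha> \<noteq> 0}. \<Sum>\<beta>\<in>{\<beta>. B \<beta> \<noteq> 0}.
      coeff_mult sc pr (evm (take n ps) (single \<alpha> (A \<alpha>))) (evm (drop n ps) (single \<beta> (B \<beta>))))"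
    using lA lB len by (intro sum.cong refl evm_pp_single) auto
  also have "\<dots> = (\<Sum>\<alpha>\<in>{\<alpha>. A \<alpha> \<noteq> 0}. coeff_mult sc pr (evm (take n ps) (single \<alpha> (A \<alpha>)))
      (\<Sum>\<beta>\<in>{\<beta>. B \<beta> \<noteq> 0}. evm (drop n ps) (single \<beta> (B \<beta>))))"
    by (intro sum.cong refl cm_sum_r[symmetric] evm_fsup)
  also have "\<dots> = coeff_mult sc pr (\<Sum>\<alpha>\<in>{\<alpha>. A \<alpha> \<noteq> 0}. evm (take n ps) (single \<alpha> (A \<alpha>)))
      (\<Sum>\<beta>\<in>{\<beta>. B \<beta> \<noteq> 0}. evm (drop n ps) (single \<beta> (B \<beta>)))"
    by (intro cm_sum_l[symmetric] evm_fsup fsup_sum)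
  also have "\<dots> = coeff_mult sc pr (evm (take n ps) A) (evm (drop n ps) B)"
    using A B l1 l2 by (simp add: evm_decomp)
  finally show ?thesis .
qed

lemma tens1_single: "tens1 b = single [0] b"
  by (simp add: tens1_def single_def)

lemma tstar_fsn: "length bs = leaves tr \<Longrightarrow> fsn (leaves tr) (tstar sc pr tr bs)"
proof (induct tr arbitrary: bs)
  case Leaf then show ?case by (simp add: tens1_single fsn_single)
next
  case (Node l r)
  show ?case using Node.prems by (simp, intro pp_fsn Node.hyps) simp_all
qed

lemma main_E:
  "length bs = leaves tr \<Longrightarrow> length ps = leaves tr \<Longrightarrow>
    evm ps (tstar sc pr tr bs) \<approx> tmon sc pr tr (map2 mon ps bs)"
proof (induct tr arbitrary: bs ps)
  case Leaf
  then obtain b p where "bs = [b]" "ps = [p]"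
    by (cases bs; cases ps) (auto simp: length_Suc_conv)
  then show ?case by (simp add: tens1_single evm_single fw_def)
next
  case (Node l r)
  let ?n = "leaves l"
  have h1: "length (take ?n bs) = leaves l" "length (take ?n ps) = leaves l"
    using Node.prems by auto
  have h2: "length (drop ?n bs) = leaves r" "length (drop ?n ps) = leaves r"
    using Node.prems by auto
  have "evm ps (tstar sc pr (Node l r) bs) = coeff_mult sc pr (evm (take ?n ps) (tstar sc pr l (take ?n bs)))
      (evm (drop ?n ps) (tstar sc pr r (drop ?n bs)))"
    using Node.prems by (simp, intro evm_pp tstar_fsn) simp_all
  also have "\<dots> \<approx> coeff_mult sc pr (tmon sc pr l (map2 mon (take ?n ps) (take ?n bs)))
      (tmon sc pr r (map2 mon (drop ?n ps) (drop ?n bs)))"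
    using h1 h2 by (intro ceq_cm Node.hyps tmon_fsup) auto
  also have "\<dots> = tmon sc pr (Node l r) (map2 mon ps bs)"
    by (simp add: take_map drop_map take_zip drop_zip)
  finally show ?case .
qed

end

lemma row_split:
  "(\<Sum>j\<le>Suc L. of_nat (Suc L choose j) * g j) =
   (\<Sum>j\<le>L. of_nat (L choose j) * g j) + (\<Sum>j\<le>L. of_nat (L choose j) * (g (Suc j) :: 'a::comm_ring_1))"
proof -
  have a: "(\<Sum>j\<le>Suc L. of_nat (Suc L choose j) * g j) = g 0 + (\<Sum>j\<le>L. of_nat (Suc L choose Suc j) * g (Suc j))"
    unfolding sum.atMost_Suc_shift by simp
  have b: "(\<Sum>j\<le>L. of_nat (Suc L choose Suc j) * g (Suc j)) =
      (\<Sum>j\<le>L. of_nat (L choose j) * g (Suc j)) + (\<Sum>j\<le>L. of_nat (L choose Suc j) * g (Suc j))"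
    by (simp add: sum.distrib algebra_simps)
  have c: "g 0 + (\<Sum>j\<le>L. of_nat (L choose Suc j) * g (Suc j)) = (\<Sum>j\<le>Suc L. of_nat (L choose j) * g j)"
    unfolding sum.atMost_Suc_shift by simp
  have d: "(\<Sum>j\<le>Suc L. of_nat (L choose j) * g j) = (\<Sum>j\<le>L. of_nat (L choose j) * g j)"
    by (simp add: sum.atMost_Suc binomial_eq_0)
  show ?thesis using a b c d by (simp add: algebra_simps)
qed

lemma fdiff:
  "(\<Sum>j\<le>L. of_nat (L choose j) * ((-1) ^ j * ((x + of_nat j) gchoose k))) =
   (if L \<le> k then (-1) ^ L * (x gchoose (k - L)) else (0::'k::field_char_0))"
proof (induct L arbitrary: x)
  case 0
  then show ?case by simp
next
  case (Suc L)
  have "(\<Sum>j\<le>Suc L. of_nat (Suc L choose j) * ((-1) ^ j * ((x + of_nat j) gchoose k)))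
     = (\<Sum>j\<le>L. of_nat (L choose j) * ((-1) ^ j * ((x + of_nat j) gchoose k)))
       - (\<Sum>j\<le>L. of_nat (L choose j) * ((-1) ^ j * (((x + 1) + of_nat j) gchoose k)))"
  proof -
    define g where "g j = (-1::'k) ^ j * ((x + of_nat j) gchoose k)" for j
    have gs: "of_nat (L choose j) * g (Suc j) = - (of_nat (L choose j) * ((-1) ^ j * (((x + 1) + of_nat j) gchoose k)))" for j
      by (simp add: g_def add_ac)
    have "(\<Sum>j\<le>Suc L. of_nat (Suc L choose j) * g j) =
      (\<Sum>j\<le>L. of_nat (L choose j) * g j) + (\<Sum>j\<le>L. of_nat (L choose j) * g (Suc j))"
      by (rule row_split)
    also have "(\<Sum>j\<le>L. of_nat (L choose j) * g (Suc j)) = - (\<Sum>j\<le>L. of_nat (L choose j) * ((-1) ^ j * (((x + 1) + of_nat j) gchoose k)))"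
      unfolding gs by (simp add: sum_negf)
    finally show ?thesis by (simp add: g_def)
  qed
  also have "\<dots> = (if L \<le> k then (-1) ^ L * (x gchoose (k - L)) else 0)
      - (if L \<le> k then (-1) ^ L * ((x + 1) gchoose (k - L)) else 0)"
    by (simp only: Suc)
  also have "\<dots> = (if Suc L \<le> k then (-1) ^ Suc L * (x gchoose (k - Suc L)) else 0)"
  proof (cases "Suc L \<le> k")
    case True
    then obtain t where t: "k - L = Suc t" "k - Suc L = t" by (metis Suc_diff_le diff_Suc_Suc le_SucE le_refl Suc_le_D diff_Suc_1)
    have "(x + 1) gchoose Suc t = (x gchoose t) + (x gchoose Suc t)" by (rule gbinomial_Suc_Suc)
    then show ?thesis using True t by (simp add: algebra_simps)
  next
    case False
    then show ?thesis by (cases "L = k") auto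
  qed
  finally show ?case .
qed


lemma choose_swap:
  assumes jK: "j \<le> K" shows "(K choose j) * ((K - j) choose a) = (K choose a) * ((K - a) choose j)"
proof (cases "a + j \<le> K")
  case True
  have "(K choose j) * ((K - j) choose a) * (fact j * fact a * fact (K - j - a)) = fact K"
  proof -
    have "fact j * fact (K - j) * (K choose j) = fact K" using binomial_fact_lemma[of j K] True by simp
    moreover have "fact a * fact (K - j - a) * ((K - j) choose a) = fact (K - j)"
      using binomial_fact_lemma[of a "K - j"] True by simp
    ultimately show ?thesis by (metis mult.assoc mult.commute)
  qed
  moreover have "(K choose a) * ((K - a) choose j) * (fact j * fact a * fact (K - j - a)) = fact K"
  proof -
    have "fact a * fact (K - a) * (K choose a) = fact K" using binomial_fact_lemma[of a K] True by simp
    moreover have "fact j * fact (K - a - j) * ((K - a) choose j) = fact (K - a)"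
      using binomial_fact_lemma[of j "K - a"] True by simp
    moreover have "K - a - j = K - j - a" by simp
    ultimately show ?thesis by (metis mult.assoc mult.commute)
  qed
  moreover have "fact j * fact a * fact (K - j - a) \<noteq> (0::nat)" by simp
  ultimately show ?thesis by (metis mult_right_cancel)
next
  case False
  then have "K - j < a" using jK by arith
  then have z1: "(K - j) choose a = 0" by (simp add: binomial_eq_0)
  have "(K choose a) = 0 \<or> ((K - a) choose j) = 0"
  proof (cases "a \<le> K")
    case True
    then have "K - a < j" using False by arith
    then show ?thesis by (simp add: binomial_eq_0)
  next
    case False
    then show ?thesis by (simp add: binomial_eq_0)
  qed
  then show ?thesis by (elim disjE) (simp_all only: z1 mult_0_right mult_0)
qed

lemma S1:
  "(\<Sum>j\<le>K. of_nat (K choose j) * (-1) ^ j * fw (of_nat (K - j)) a * fw (x + of_nat j) k)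
   = (if a \<le> K \<and> K - a \<le> k then (-1) ^ a * (fact K / fact (K - a)) * (fact k / fact (k - (K - a)))
        * fw x (k - (K - a)) else (0::'k::field_char_0))"
proof -
  have "(\<Sum>j\<le>K. of_nat (K choose j) * (-1) ^ j * fw (of_nat (K - j)) a * fw (x + of_nat j) k)
    = (\<Sum>j\<le>K. ((-1) ^ a * fact a * of_nat (K choose a) * (-1) ^ k * fact k) *
         (of_nat ((K - a) choose j) * ((-1) ^ j * ((x + of_nat j) gchoose k))))"
  proof (rule sum.cong)
    fix j assume "j \<in> {..K}"
    then have "of_nat ((K choose j) * ((K - j) choose a)) = (of_nat ((K choose a) * ((K - a) choose j)) :: 'k)"
      using choose_swap[of j K a] by simp
    then have h: "of_nat (K choose j) * of_nat ((K - j) choose a) = (of_nat (K choose a) * of_nat ((K - a) choose j) :: 'k)"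
      by (simp only: of_nat_mult)
    define R where "R = (-1::'k) ^ j * (-1) ^ a * fact a * (-1) ^ k * fact k * ((x + of_nat j) gchoose k)"
    then show "of_nat (K choose j) * (-1) ^ j * fw (of_nat (K - j)) a * fw (x + of_nat j) k =
      ((-1) ^ a * fact a * of_nat (K choose a) * (-1) ^ k * fact k) *
         (of_nat ((K - a) choose j) * ((-1) ^ j * ((x + of_nat j) gchoose k)))"
    proof -
      have "of_nat (K choose j) * (-1) ^ j * fw (of_nat (K - j)) a * fw (x + of_nat j) k
          = (of_nat (K choose j) * of_nat ((K - j) choose a)) * R"
        unfolding fw_def binomial_gbinomial[symmetric] R_def by (simp add: mult_ac)
      also have "\<dots> = (of_nat (K choose a) * of_nat ((K - a) choose j)) * R" by (simp only: h)
      also have "\<dots> = ((-1) ^ a * fact a * of_nat (K choose a) * (-1) ^ k * fact k) *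
         (of_nat ((K - a) choose j) * ((-1) ^ j * ((x + of_nat j) gchoose k)))"
        unfolding R_def by (simp add: mult_ac)
      finally show ?thesis .
    qed
  qed simp
  also have "\<dots> = ((-1) ^ a * fact a * of_nat (K choose a) * (-1) ^ k * fact k) *
         (\<Sum>j\<le>K. of_nat ((K - a) choose j) * ((-1) ^ j * ((x + of_nat j) gchoose k)))"
    by (simp add: sum_distrib_left)
  also have "\<dots> = (if a \<le> K \<and> K - a \<le> k then (-1) ^ a * (fact K / fact (K - a)) * (fact k / fact (k - (K - a)))
        * fw x (k - (K - a)) else 0)"
  proof (cases "a \<le> K")
    case True
    then obtain L where L: "K = a + L" by (metis le_add_diff_inverse)
    have "(\<Sum>j\<le>K. of_nat ((K - a) choose j) * ((-1) ^ j * ((x + of_nat j) gchoose k)))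
       = (\<Sum>j\<le>L. of_nat (L choose j) * ((-1) ^ j * ((x + of_nat j) gchoose k)))"
      unfolding L by (simp, rule sum.mono_neutral_right) (auto simp: binomial_eq_0)
    also have "\<dots> = (if L \<le> k then (-1) ^ L * (x gchoose (k - L)) else 0)" by (rule fdiff)
    finally have s: "(\<Sum>j\<le>K. of_nat ((K - a) choose j) * ((-1) ^ j * ((x + of_nat j) gchoose k)))
       = (if L \<le> k then (-1) ^ L * (x gchoose (k - L)) else 0)" .
    show ?thesis
    proof (cases "L \<le> k")
      case True
      then obtain t where t: "k = L + t" by (metis le_add_diff_inverse)
      have fK: "fact a * of_nat (K choose a) = (fact K / fact L :: 'k)"
      proof -
        have "fact a * fact L * of_nat (K choose a) = (fact K :: 'k)"
          using binomial_fact_lemma[of a K] L by (metis add_diff_cancel_left' le_add1 of_nat_fact of_nat_mult)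
        then show ?thesis by (simp add: field_simps)
      qed
      have fk: "(fact k / fact t) * fact t = (fact k :: 'k)" by simp
      have sg: "(-1::'k) ^ k * (-1) ^ L = (-1) ^ t"
        unfolding t power_add by (simp add: algebra_simps power_mult_distrib[symmetric])
      have fK': "of_nat ((L + a) choose a) = (fact (L + a) / (fact L * fact a) :: 'k)"
        using fK L by (simp add: field_simps)
      have ff: "fact L * (fact a * of_nat ((L + a) choose a)) = (fact (L + a) :: 'k)"
        using fK' by (simp add: field_simps)
      show ?thesis using True L t s
        apply (simp add: fw_def)
        using sg ff by (simp add: field_simps)
    next
      case False
      then show ?thesis using s L by simp
    qed
  next
    case False
    then have "K choose a = 0" by (simp add: binomial_eq_0)
    then show ?thesis using False by simp
  qed
  finally show ?thesis .
qed


definition below :: "nat list \<Rightarrow> nat list set" where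
  "below K = {j. length j = length K \<and> list_all2 (\<le>) j K}"

lemma below_Nil[simp]: "below [] = {[]}" by (auto simp: below_def)

lemma below_Cons: "below (k # K) = (\<lambda>(x, j). x # j) ` ({..k} \<times> below K)"
proof (rule set_eqI)
  fix l
  show "l \<in> below (k # K) \<longleftrightarrow> l \<in> (\<lambda>(x, j). x # j) ` ({..k} \<times> below K)"
  proof
    assume "l \<in> below (k # K)"
    then obtain x j where "l = x # j" "x \<le> k" "j \<in> below K"
      by (cases l) (auto simp: below_def)
    then show "l \<in> (\<lambda>(x, j). x # j) ` ({..k} \<times> below K)" by force
  qed (auto simp: below_def)
qed

lemma finite_below': "finite (below K)"
  unfolding below_def using finite_below[of "length K" K] by simp

lemma sum_below_Cons: "(\<Sum>j\<in>below (k # K). f j) = (\<Sum>x\<le>k. \<Sum>j\<in>below K. f (x # j))"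
proof -
  have inj: "inj_on (\<lambda>(x, j). x # j) ({..k} \<times> below K)" by (auto simp: inj_on_def)
  show ?thesis unfolding below_Cons sum.reindex[OF inj] by (simp add: sum.cartesian_product split_def)
qed

lemma G:
  "length A = length K \<Longrightarrow>
   (\<Sum>j\<in>below K. prod_list (map2 (\<lambda>Ki ji. of_nat (Ki choose ji) * (-1) ^ ji) K j) *
        prod_list (map2 (\<lambda>d a. fw (of_nat d) a) (map2 (-) K j) A) * fw (x + of_nat (sum_list j)) k)
   = (if list_all2 (\<le>) A K \<and> sum_list (map2 (-) K A) \<le> k
      then prod_list (map2 (\<lambda>Ki Ai. (-1) ^ Ai * (fact Ki / fact (Ki - Ai))) K A) *
           (fact k / fact (k - sum_list (map2 (-) K A))) * fw x (k - sum_list (map2 (-) K A))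
      else (0::'k::field_char_0))"
proof (induct K arbitrary: A x k)
  case Nil
  then show ?case by simp
next
  case (Cons K0 K)
  then obtain A0 A' where A: "A = A0 # A'" "length A' = length K" by (cases A) auto
  define c' where "c' = (list_all2 (\<le>) A' K \<and> sum_list (map2 (-) K A') \<le> k)"
  define r' where "r' = sum_list (map2 (-) K A')"
  define Pr' where "Pr' = (prod_list (map2 (\<lambda>Ki Ai. (-1) ^ Ai * (fact Ki / fact (Ki - Ai))) K A') :: 'k)"
  have IH: "(\<Sum>j\<in>below K. prod_list (map2 (\<lambda>Ki ji. of_nat (Ki choose ji) * (-1) ^ ji) K j) *
        prod_list (map2 (\<lambda>d a. fw (of_nat d) a) (map2 (-) K j) A') * fw (y + of_nat (sum_list j)) k)
      = (if c' then Pr' * (fact k / fact (k - r')) * fw y (k - r') else 0)" for y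
    using Cons.hyps[OF A(2), of y k] unfolding c'_def r'_def Pr'_def .
  have "(\<Sum>j\<in>below (K0 # K). prod_list (map2 (\<lambda>Ki ji. of_nat (Ki choose ji) * (-1) ^ ji) (K0 # K) j) *
        prod_list (map2 (\<lambda>d a. fw (of_nat d) a) (map2 (-) (K0 # K) j) A) * fw (x + of_nat (sum_list j)) k)
    = (\<Sum>j0\<le>K0. (of_nat (K0 choose j0) * (-1) ^ j0 * fw (of_nat (K0 - j0)) A0) *
        (\<Sum>j\<in>below K. prod_list (map2 (\<lambda>Ki ji. of_nat (Ki choose ji) * (-1) ^ ji) K j) *
        prod_list (map2 (\<lambda>d a. fw (of_nat d) a) (map2 (-) K j) A') * fw ((x + of_nat j0) + of_nat (sum_list j)) k))"
    unfolding sum_below_Cons A(1) by (simp add: sum_distrib_left mult_ac add_ac)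
  also have "\<dots> = (\<Sum>j0\<le>K0. (of_nat (K0 choose j0) * (-1) ^ j0 * fw (of_nat (K0 - j0)) A0) *
        (if c' then Pr' * (fact k / fact (k - r')) * fw (x + of_nat j0) (k - r') else 0))"
    by (simp only: IH)
  also have "\<dots> = (if c' then Pr' * (fact k / fact (k - r')) *
       (\<Sum>j0\<le>K0. of_nat (K0 choose j0) * (-1) ^ j0 * fw (of_nat (K0 - j0)) A0 * fw (x + of_nat j0) (k - r')) else 0)"
    by (simp add: sum_distrib_left mult_ac)
  also have "\<dots> = (if c' then Pr' * (fact k / fact (k - r')) *
       (if A0 \<le> K0 \<and> K0 - A0 \<le> k - r' then (-1) ^ A0 * (fact K0 / fact (K0 - A0)) * (fact (k - r') / fact (k - r' - (K0 - A0)))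
        * fw x (k - r' - (K0 - A0)) else 0) else 0)"
    by (simp only: S1)
  also have "\<dots> = (if list_all2 (\<le>) A (K0 # K) \<and> sum_list (map2 (-) (K0 # K) A) \<le> k
      then prod_list (map2 (\<lambda>Ki Ai. (-1) ^ Ai * (fact Ki / fact (Ki - Ai))) (K0 # K) A) *
           (fact k / fact (k - sum_list (map2 (-) (K0 # K) A))) * fw x (k - sum_list (map2 (-) (K0 # K) A))
      else 0)"
  proof (cases "c' \<and> A0 \<le> K0 \<and> K0 - A0 \<le> k - r'")
    case True
    then have rk: "r' \<le> k" "K0 - A0 + r' \<le> k" by (auto simp: c'_def r'_def)
    have e1: "k - (K0 - A0 + r') = k - r' - (K0 - A0)" by simp
    have e2: "(fact k / fact (k - r')) * (fact (k - r') / fact (k - r' - (K0 - A0))) = (fact k / fact (k - r' - (K0 - A0)) :: 'k)"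
      by simp
    have cnd: "(list_all2 (\<le>) (A0 # A') (K0 # K) \<and> sum_list (map2 (-) (K0 # K) (A0 # A')) \<le> k) = True"
      using True rk by (simp add: c'_def r'_def)
    have pe: "prod_list (map2 (\<lambda>Ki Ai. (-1) ^ Ai * (fact Ki / fact (Ki - Ai))) (K0 # K) (A0 # A')) =
        ((-1) ^ A0 * (fact K0 / fact (K0 - A0))) * Pr'"
      unfolding Pr'_def by simp
    have se: "sum_list (map2 (-) (K0 # K) (A0 # A')) = K0 - A0 + r'" unfolding r'_def by simp
    have tt: "(c' \<and> A0 \<le> K0 \<and> K0 - A0 \<le> k - r') = True" "c' = True" using True by auto
    have "(if c' then Pr' * (fact k / fact (k - r')) *
       (if A0 \<le> K0 \<and> K0 - A0 \<le> k - r' then (-1) ^ A0 * (fact K0 / fact (K0 - A0)) * (fact (k - r') / fact (k - r' - (K0 - A0)))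
        * fw x (k - r' - (K0 - A0)) else 0) else 0)
      = Pr' * (fact k / fact (k - r')) * ((-1) ^ A0 * (fact K0 / fact (K0 - A0)) * (fact (k - r') / fact (k - r' - (K0 - A0)))
        * fw x (k - r' - (K0 - A0)))"
      using True by simp
    also have "\<dots> = ((-1) ^ A0 * (fact K0 / fact (K0 - A0))) * Pr' * (fact k / fact (k - r' - (K0 - A0))) * fw x (k - r' - (K0 - A0))"
      by (simp only: e2[symmetric] mult_ac)
    also have "\<dots> = (if list_all2 (\<le>) A (K0 # K) \<and> sum_list (map2 (-) (K0 # K) A) \<le> k
      then prod_list (map2 (\<lambda>Ki Ai. (-1) ^ Ai * (fact Ki / fact (Ki - Ai))) (K0 # K) A) *
           (fact k / fact (k - sum_list (map2 (-) (K0 # K) A))) * fw x (k - sum_list (map2 (-) (K0 # K) A))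
      else 0)"
    proof -
      have cnd': "(list_all2 (\<le>) (A0 # A') (K0 # K) \<and> K0 - A0 + r' \<le> k) = True" using cnd unfolding se by auto
      show ?thesis unfolding A(1) se cnd' if_True pe e1 ..
    qed
    finally show ?thesis .
  next
    case False
    then show ?thesis unfolding A(1) by (auto simp: c'_def r'_def)
  qed
  finally show ?case .
qed

definition permlist :: "(nat \<Rightarrow> nat) \<Rightarrow> 'a list \<Rightarrow> 'a list" where
  "permlist \<sigma> xs = map (\<lambda>k. xs ! \<sigma> k) [0..<length xs]"

lemma perm_tens_permlist: "perm_tens \<sigma> A = (\<lambda>\<beta>. A (permlist \<sigma> \<beta>))"
  by (simp add: perm_tens_def permlist_def)

lemma length_permlist[simp]: "length (permlist \<sigma> xs) = length xs"
  by (simp add: permlist_def)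

lemma permlist_nth: "k < length xs \<Longrightarrow> permlist \<sigma> xs ! k = xs ! \<sigma> k"
  by (simp add: permlist_def)

lemma permlist_inv1:
  assumes "\<sigma> permutes {..<length xs}"
  shows "permlist \<sigma> (permlist (inv \<sigma>) xs) = xs"
proof (rule nth_equalityI)
  fix k assume "k < length (permlist \<sigma> (permlist (inv \<sigma>) xs))"
  then have k: "k < length xs" by simp
  then have "\<sigma> k < length xs" using assms permutes_in_image by fastforce
  then show "permlist \<sigma> (permlist (inv \<sigma>) xs) ! k = xs ! k"
    using k by (simp add: permlist_nth permutes_inverses(2)[OF assms])
qed simp

lemma permlist_inv2:
  assumes "\<sigma> permutes {..<length xs}"
  shows "permlist (inv \<sigma>) (permlist \<sigma> xs) = xs"
proof (rule nth_equalityI)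
  fix k assume "k < length (permlist (inv \<sigma>) (permlist \<sigma> xs))"
  then have k: "k < length xs" by simp
  have "inv \<sigma> permutes {..<length xs}" using assms by (rule permutes_inv)
  then have "inv \<sigma> k < length xs" using k permutes_in_image by fastforce
  then show "permlist (inv \<sigma>) (permlist \<sigma> xs) ! k = xs ! k"
    using k by (simp add: permlist_nth permutes_inverses(1)[OF assms])
qed simp

lemma sum_list_permlist:
  assumes "\<sigma> permutes {..<length xs}"
  shows "sum_list (permlist \<sigma> xs) = (sum_list xs :: 'a::comm_monoid_add)"
proof -
  have "sum_list (permlist \<sigma> xs) = (\<Sum>k<length xs. xs ! \<sigma> k)"
    by (simp add: sum_list_sum_nth permlist_nth atLeast0LessThan)
  also have "\<dots> = (\<Sum>k<length xs. xs ! k)"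
    using sum.permute[OF assms, of "\<lambda>k. xs ! k"] by (simp add: comp_def)
  also have "\<dots> = sum_list xs" by (simp add: sum_list_sum_nth atLeast0LessThan)
  finally show ?thesis .
qed

lemma evw_prod: "length \<alpha> = length ps \<Longrightarrow> evw ps \<alpha> = (\<Prod>i<length ps. fw (of_int (ps ! i)) (\<alpha> ! i) :: 'k::field_char_0)"
proof (induct ps arbitrary: \<alpha>)
  case Nil then show ?case by simp
next
  case (Cons p ps)
  then obtain a as where "\<alpha> = a # as" "length as = length ps" by (cases \<alpha>) auto
  with Cons show ?case by (simp only: length_Cons prod.lessThan_Suc_shift) simp
qed

lemma evw_permlist:
  assumes "\<sigma> permutes {..<length ps}" "length \<alpha> = length ps"
  shows "evw (permlist \<sigma> ps) (permlist \<sigma> \<alpha>) = (evw ps \<alpha> :: 'k::field_char_0)"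
proof -
  have "evw (permlist \<sigma> ps) (permlist \<sigma> \<alpha>) = (\<Prod>i<length ps. fw (of_int (ps ! \<sigma> i)) (\<alpha> ! \<sigma> i) :: 'k)"
    using assms by (simp add: evw_prod permlist_nth)
  also have "\<dots> = (\<Prod>i<length ps. fw (of_int (ps ! i)) (\<alpha> ! i))"
    using prod.permute[OF assms(1), of "\<lambda>i. fw (of_int (ps ! i)) (\<alpha> ! i) :: 'k"] by (simp add: comp_def)
  also have "\<dots> = evw ps \<alpha>" using assms by (simp add: evw_prod)
  finally show ?thesis .
qed

context CA begin

lemma fsn_perm:
  assumes "\<sigma> permutes {..<n}" "fsn n A"
  shows "fsn n (perm_tens \<sigma> A)"
proof -
  have sub: "{\<beta>. perm_tens \<sigma> A \<beta> \<noteq> 0} \<subseteq> permlist (inv \<sigma>) ` {\<alpha>. A \<alpha> \<noteq> 0}"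
  proof
    fix \<beta> assume "\<beta> \<in> {\<beta>. perm_tens \<sigma> A \<beta> \<noteq> 0}"
    then have h: "A (permlist \<sigma> \<beta>) \<noteq> 0" by (simp add: perm_tens_permlist)
    then have "length \<beta> = n" using assms(2) by (auto simp: fsn_def)
    then have "\<beta> = permlist (inv \<sigma>) (permlist \<sigma> \<beta>)" using assms(1) permlist_inv2 by metis
    then show "\<beta> \<in> permlist (inv \<sigma>) ` {\<alpha>. A \<alpha> \<noteq> 0}" using h by blast
  qed
  have "finite {\<beta>. perm_tens \<sigma> A \<beta> \<noteq> 0}"
    using assms(2) by (intro finite_subset[OF sub]) (auto simp: fsn_def)
  moreover have "\<forall>\<beta>. perm_tens \<sigma> A \<beta> \<noteq> 0 \<longrightarrow> length \<beta> = n"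
    using assms(2) by (auto simp: fsn_def perm_tens_permlist)
  ultimately show ?thesis by (simp add: fsn_def)
qed

lemma evm_perm:
  assumes "\<sigma> permutes {..<length ps}" "fsn (length ps) A"
  shows "evm ps (perm_tens \<sigma> A) = evm (permlist \<sigma> ps) A"
  unfolding evm_def perm_tens_permlist length_permlist
proof (rule sum.reindex_bij_witness[of _ "permlist (inv \<sigma>)" "permlist \<sigma>"])
  fix \<beta> assume "\<beta> \<in> {\<alpha>. length \<alpha> = length ps \<and> A (permlist \<sigma> \<alpha>) \<noteq> 0}"
  then have b: "length \<beta> = length ps" "A (permlist \<sigma> \<beta>) \<noteq> 0" by auto
  show "permlist (inv \<sigma>) (permlist \<sigma> \<beta>) = \<beta>" using permlist_inv2 assms(1) b(1) by metis
  show "permlist \<sigma> \<beta> \<in> {\<alpha>. length \<alpha> = length ps \<and> A \<alpha> \<noteq> 0}" using b by simp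
  have s1: "sum_list (permlist \<sigma> \<beta>) = sum_list \<beta>" using assms(1) b(1) by (metis sum_list_permlist)
  have s2: "sum_list (permlist \<sigma> ps) = sum_list ps" using assms(1) by (rule sum_list_permlist)
  have s3: "evw (permlist \<sigma> ps) (permlist \<sigma> \<beta>) = (evw ps \<beta> :: 'k)" using assms(1) b(1) by (rule evw_permlist)
  show "mon (sum_list (permlist \<sigma> ps) - int (sum_list (permlist \<sigma> \<beta>))) (sc (evw (permlist \<sigma> ps) (permlist \<sigma> \<beta>)) (A (permlist \<sigma> \<beta>)))
    = mon (sum_list ps - int (sum_list \<beta>)) (sc (evw ps \<beta>) (A (permlist \<sigma> \<beta>)))"
    by (simp only: s1 s2 s3)
next
  fix \<alpha> assume "\<alpha> \<in> {\<alpha>. length \<alpha> = length ps \<and> A \<alpha> \<noteq> 0}"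
  then have a: "length \<alpha> = length ps" "A \<alpha> \<noteq> 0" by auto
  show "permlist \<sigma> (permlist (inv \<sigma>) \<alpha>) = \<alpha>" using permlist_inv1 assms(1) a(1) by metis
  show "permlist (inv \<sigma>) \<alpha> \<in> {\<alpha>. length \<alpha> = length ps \<and> A (permlist \<sigma> \<alpha>) \<noteq> 0}"
    using a permlist_inv1 assms(1) by (metis (mono_tags, lifting) length_permlist mem_Collect_eq)
qed

end

lemma sum_PiE_lists:
  "(\<Sum>js\<in>PiE {..<m} (\<lambda>l. {..b l}). g (map js [0..<m])) = (\<Sum>j\<in>{j. length j = m \<and> (\<forall>i<m. j ! i \<le> b i)}. g j)"
proof (rule sum.reindex_bij_betw)
  let ?f = "\<lambda>js. map js [0..<m]"
  let ?f' = "\<lambda>j l. if l < m then j ! l else undefined"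
  show "bij_betw ?f (PiE {..<m} (\<lambda>l. {..b l})) {j. length j = m \<and> (\<forall>i<m. j ! i \<le> b i)}"
  proof (rule bij_betw_byWitness[where f' = ?f'])
    show "\<forall>js\<in>PiE {..<m} (\<lambda>l. {..b l}). ?f' (?f js) = js"
    proof
      fix js assume a: "js \<in> PiE {..<m} (\<lambda>l. {..b l})"
      show "?f' (?f js) = js"
      proof
        fix l
        show "?f' (?f js) l = js l"
        proof (cases "l < m")
          case True then show ?thesis by simp
        next
          case False
          then have "l \<notin> {..<m}" by simp
          then have "js l = undefined" by (rule PiE_arb[OF a])
          then show ?thesis using False by simp
        qed
      qed
    qed
    show "\<forall>j\<in>{j. length j = m \<and> (\<forall>i<m. j ! i \<le> b i)}. ?f (?f' j) = j"
    proof
      fix j assume "j \<in> {j. length j = m \<and> (\<forall>i<m. j ! i \<le> b i)}"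
      then have "length j = m" by simp
      then show "?f (?f' j) = j" by (intro nth_equalityI) simp_all
    qed
    show "?f ` PiE {..<m} (\<lambda>l. {..b l}) \<subseteq> {j. length j = m \<and> (\<forall>i<m. j ! i \<le> b i)}"
    proof
      fix x assume "x \<in> ?f ` PiE {..<m} (\<lambda>l. {..b l})"
      then obtain js where x: "x = ?f js" and js: "js \<in> PiE {..<m} (\<lambda>l. {..b l})" by blast
      have "\<forall>i<m. js i \<le> b i" using js by (simp add: PiE_iff)
      then show "x \<in> {j. length j = m \<and> (\<forall>i<m. j ! i \<le> b i)}" unfolding x by simp
    qed
    show "?f' ` {j. length j = m \<and> (\<forall>i<m. j ! i \<le> b i)} \<subseteq> PiE {..<m} (\<lambda>l. {..b l})"
    proof
      fix x assume "x \<in> ?f' ` {j. length j = m \<and> (\<forall>i<m. j ! i \<le> b i)}"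
      then obtain j where x: "x = ?f' j" and j: "length j = m" "\<forall>i<m. j ! i \<le> b i" by blast
      show "x \<in> PiE {..<m} (\<lambda>l. {..b l})" unfolding x PiE_iff extensional_def using j by simp
    qed
  qed
qed

lemma below_map: "below (map ks [0..<m]) = {j. length j = m \<and> (\<forall>i<m. j ! i \<le> ks i)}"
  by (auto simp: below_def list_all2_conv_all_nth)

lemma prod_list_map2_upt: "prod_list (map2 f (map a [0..<m]) (map b [0..<m])) = (\<Prod>l<m. f (a l) (b l))"
proof (induct m)
  case 0 then show ?case by simp
next
  case (Suc m) then show ?case by (simp add: zip_append1 prod.lessThan_Suc mult.commute)
qed

lemma sum_list_map_upt: "sum_list (map a [0..<m]) = (\<Sum>l<m. a l)"
  by (simp add: sum_list_sum_nth atLeast0LessThan)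

lemma pairing_antipode: "pairing (antipode_t x) k = fact k * (-1) ^ k * coeff x k"
  by (simp add: pairing_def antipode_t_def coeff_pcompose_linear)

lemma sign_prod:
  "list_all2 (\<le>) A K \<Longrightarrow>
   prod_list (map (\<lambda>Ki. fact Ki * (-1) ^ Ki) K) * ((-1) ^ sum_list (map2 (-) K A) / prod_list (map fact (map2 (-) K A)))
   = (prod_list (map2 (\<lambda>Ki Ai. (-1) ^ Ai * (fact Ki / fact (Ki - Ai))) K A) :: 'k::field_char_0)"
proof (induct K arbitrary: A)
  case Nil then show ?case by simp
next
  case (Cons K0 K)
  then obtain A0 A' where A: "A = A0 # A'" "A0 \<le> K0" "list_all2 (\<le>) A' K"
    by (cases A) auto
  have IH: "prod_list (map (\<lambda>Ki. fact Ki * (-1) ^ Ki) K) * ((-1) ^ sum_list (map2 (-) K A') / prod_list (map fact (map2 (-) K A')))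
   = (prod_list (map2 (\<lambda>Ki Ai. (-1) ^ Ai * (fact Ki / fact (Ki - Ai))) K A') :: 'k)"
    using Cons.hyps[OF A(3)] .
  have sg: "(-1::'k) ^ K0 * (-1) ^ (K0 - A0) = (-1) ^ A0"
  proof -
    obtain d where "K0 = A0 + d" using A(2) le_Suc_ex by blast
    then show ?thesis by (simp add: power_add algebra_simps power_mult_distrib[symmetric])
  qed
  have "prod_list (map (\<lambda>Ki. fact Ki * (-1) ^ Ki) (K0 # K)) * ((-1) ^ sum_list (map2 (-) (K0 # K) (A0 # A')) / prod_list (map fact (map2 (-) (K0 # K) (A0 # A'))))
     = ((fact K0 :: 'k) * ((-1) ^ K0 * (-1) ^ (K0 - A0)) / fact (K0 - A0)) *
       (prod_list (map (\<lambda>Ki. fact Ki * (-1) ^ Ki) K) * ((-1) ^ sum_list (map2 (-) K A') / prod_list (map fact (map2 (-) K A'))))"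
  proof -
    define P where "P = (prod_list (map (\<lambda>Ki. fact Ki * (-1) ^ Ki) K) :: 'k)"
    define S where "S = sum_list (map2 (-) K A')"
    define Q where "Q = (prod_list (map fact (map2 (-) K A')) :: 'k)"
    have nz: "Q \<noteq> 0" unfolding Q_def by (auto simp: prod_list_zero_iff)
    have aux: "\<And>(f::'k) g a b c d e. f \<noteq> 0 \<Longrightarrow> g \<noteq> 0 \<Longrightarrow> (a * b * c) * (d * e / (f * g)) = a * (b * d) / f * (c * (e / g))"
      by (simp add: field_simps)
    have "prod_list (map (\<lambda>Ki. fact Ki * (-1) ^ Ki) (K0 # K)) * ((-1) ^ sum_list (map2 (-) (K0 # K) (A0 # A')) / prod_list (map fact (map2 (-) (K0 # K) (A0 # A'))))
      = (fact K0 * (-1) ^ K0 * P) * ((-1) ^ (K0 - A0) * (-1) ^ S / (fact (K0 - A0) * Q))"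
      unfolding P_def S_def Q_def by (simp only: list.map zip_Cons_Cons prod_list.Cons sum_list.Cons power_add split_conv)
    also have "\<dots> = (fact K0 * ((-1) ^ K0 * (-1) ^ (K0 - A0)) / fact (K0 - A0)) * (P * ((-1) ^ S / Q))"
      by (rule aux[OF _ nz]) simp
    finally show ?thesis by (simp only: P_def S_def Q_def)
  qed
  also have "\<dots> = ((-1) ^ A0 * (fact K0 / fact (K0 - A0))) * prod_list (map2 (\<lambda>Ki Ai. (-1) ^ Ai * (fact Ki / fact (Ki - Ai))) K A')"
    unfolding IH sg by simp
  finally show ?case unfolding A(1) by simp
qed

context CA begin

lemma Dpow_0[simp]: "(Dop ^^ k) 0 = 0"
  by (induct k) auto

definition thC :: "nat list \<Rightarrow> nat list \<Rightarrow> bool" where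
  "thC \<alpha> \<beta> \<longleftrightarrow> list_all2 (\<le>) (butlast \<alpha>) \<beta> \<and> sum_list (map2 (-) \<beta> (butlast \<alpha>)) \<le> last \<alpha>"

definition thT :: "nat list \<Rightarrow> nat list \<Rightarrow> 'c \<Rightarrow> 'c" where
  "thT \<alpha> \<beta> c = (let l = map2 (-) \<beta> (butlast \<alpha>); r = sum_list l; k = last \<alpha> in
          sc (of_nat (k choose r) * (-1) ^ r * fact r / prod_list (map fact l)) ((Dop ^^ (k - r)) c))"

lemma thT_0[simp]: "thT \<alpha> \<beta> 0 = 0" by (simp add: thT_def Let_def)

lemma theta_alt: "theta sc Dop n A \<beta> = (if length \<beta> = n - 1 then
   (\<Sum>\<alpha>\<in>{\<alpha>. length \<alpha> = n \<and> A \<alpha> \<noteq> 0 \<and> thC \<alpha> \<beta>}. thT \<alpha> \<beta> (A \<alpha>)) else 0)"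
  unfolding theta_def thC_def thT_def by simp

lemma theta_single: "theta sc Dop n (single \<alpha> c) \<beta> =
   (if length \<beta> = n - 1 \<and> length \<alpha> = n \<and> thC \<alpha> \<beta> then thT \<alpha> \<beta> c else 0)"
proof (cases "length \<beta> = n - 1")
  case False
  then show ?thesis by (simp add: theta_alt)
next
  case lb: True
  show ?thesis
  proof (cases "length \<alpha> = n \<and> thC \<alpha> \<beta> \<and> c \<noteq> 0")
    case True
    then have "{\<alpha>'. length \<alpha>' = n \<and> single \<alpha> c \<alpha>' \<noteq> 0 \<and> thC \<alpha>' \<beta>} = {\<alpha>}" by (auto simp: single_def)
    then show ?thesis using True lb by (simp add: theta_alt single_def)
  next
    case False
    then have "{\<alpha>'. length \<alpha>' = n \<and> single \<alpha> c \<alpha>' \<noteq> 0 \<and> thC \<alpha>' \<beta>} = {}" by (auto simp: single_def)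
    then show ?thesis using False lb by (auto simp: theta_alt single_def)
  qed
qed

lemma theta_decomp:
  assumes "finite {\<alpha>. A \<alpha> \<noteq> 0}"
  shows "theta sc Dop n A \<beta> = (\<Sum>\<alpha>\<in>{\<alpha>. A \<alpha> \<noteq> 0}. theta sc Dop n (single \<alpha> (A \<alpha>)) \<beta>)"
proof -
  have "(\<Sum>\<alpha>\<in>{\<alpha>. length \<alpha> = n \<and> A \<alpha> \<noteq> 0 \<and> thC \<alpha> \<beta>}. thT \<alpha> \<beta> (A \<alpha>)) =
      (\<Sum>\<alpha>\<in>{\<alpha>. A \<alpha> \<noteq> 0}. if length \<alpha> = n \<and> thC \<alpha> \<beta> then thT \<alpha> \<beta> (A \<alpha>) else 0)"
    using assms by (subst sum.inter_filter[symmetric]) (auto intro: sum.cong)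
  then show ?thesis by (simp add: theta_alt[of n A] theta_single)
qed

end

lemma evw_int: "evw (map int ds) as = (prod_list (map2 (\<lambda>d a. fw (of_nat d) a) ds as) :: 'k::field_char_0)"
proof (induct ds arbitrary: as)
  case Nil then show ?case by simp
next
  case (Cons d ds) then show ?case by (cases as) auto
qed

lemma sum_list_map2_le: "list_all2 (\<le>) A K \<Longrightarrow> sum_list K = sum_list A + sum_list (map2 (-) K (A::nat list))"
proof (induct K arbitrary: A)
  case Nil then show ?case by simp
next
  case (Cons k K) then show ?case by (cases A) auto
qed

context CA begin

lemma Dpow_sc: "(Dop ^^ k) (sc a c) = sc a ((Dop ^^ k) c)"
  by (induct k) (auto simp: D_sc)

lemma theta_fin:
  assumes "fsn n A"
  shows "finite {\<beta>. theta sc Dop n A \<beta> \<noteq> 0}"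
proof -
  have fA: "finite {\<alpha>. A \<alpha> \<noteq> 0}" using assms by (simp add: fsn_def)
  have sub: "{\<beta>. theta sc Dop n A \<beta> \<noteq> 0} \<subseteq> (\<Union>\<alpha>\<in>{\<alpha>. A \<alpha> \<noteq> 0}. {\<beta>. set \<beta> \<subseteq> {..sum_list \<alpha>} \<and> length \<beta> = n - 1})"
  proof
    fix \<beta> assume "\<beta> \<in> {\<beta>. theta sc Dop n A \<beta> \<noteq> 0}"
    then have "(\<Sum>\<alpha>\<in>{\<alpha>. A \<alpha> \<noteq> 0}. theta sc Dop n (single \<alpha> (A \<alpha>)) \<beta>) \<noteq> 0"
      by (simp add: theta_decomp[OF fA])
    then obtain \<alpha> where \<alpha>0: "\<alpha> \<in> {\<alpha>. A \<alpha> \<noteq> 0}" "theta sc Dop n (single \<alpha> (A \<alpha>)) \<beta> \<noteq> 0"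
      by (rule sum.not_neutral_contains_not_neutral)
    then have \<alpha>: "A \<alpha> \<noteq> 0" "theta sc Dop n (single \<alpha> (A \<alpha>)) \<beta> \<noteq> 0" by auto
    then have h: "length \<beta> = n - 1" "length \<alpha> = n" "thC \<alpha> \<beta>"
      by (auto simp: theta_single split: if_splits)
    let ?a = "butlast \<alpha>"
    have ha: "list_all2 (\<le>) ?a \<beta>" "sum_list (map2 (-) \<beta> ?a) \<le> last \<alpha>" using h(3) by (auto simp: thC_def)
    have li0: "length ?a = length \<beta>" using ha(1) by (rule list_all2_lengthD)
    have sa: "sum_list \<alpha> = sum_list ?a + last \<alpha>" if ne: "\<alpha> \<noteq> []"
    proof -
      have "sum_list \<alpha> = sum_list (?a @ [last \<alpha>])" using ne by simp
      then show ?thesis by simp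
    qed
    have "set \<beta> \<subseteq> {..sum_list \<alpha>}"
    proof
      fix x assume "x \<in> set \<beta>"
      then obtain i where i: "i < length \<beta>" "\<beta> ! i = x" by (auto simp: in_set_conv_nth)
      have li: "length ?a = length \<beta>" using ha(1) by (rule list_all2_lengthD)
      have "?a ! i \<le> \<beta> ! i" using ha(1) i(1) li by (auto simp: list_all2_conv_all_nth)
      have "?a ! i \<le> sum_list ?a" using i(1) li by (auto intro: elem_le_sum_list)
      moreover have "\<beta> ! i - ?a ! i \<le> sum_list (map2 (-) \<beta> ?a)"
      proof -
        have "map2 (-) \<beta> ?a ! i = \<beta> ! i - ?a ! i" using i(1) li by simp
        moreover have "i < length (map2 (-) \<beta> ?a)" using i(1) li by simp
        ultimately show ?thesis by (metis elem_le_sum_list)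
      qed
      moreover have "\<alpha> \<noteq> []" using li0 i(1) by auto
      ultimately show "x \<in> {..sum_list \<alpha>}" using i(2) ha(2) sa \<open>?a ! i \<le> \<beta> ! i\<close> by simp
    qed
    then show "\<beta> \<in> (\<Union>\<alpha>\<in>{\<alpha>. A \<alpha> \<noteq> 0}. {\<beta>. set \<beta> \<subseteq> {..sum_list \<alpha>} \<and> length \<beta> = n - 1})"
      using \<alpha>(1) h(1) by blast
  qed
  show ?thesis by (rule finite_subset[OF sub]) (use fA in \<open>auto intro: finite_lists_length_eq\<close>)
qed


lemma Pmap_formula:
  assumes fin: "finite {\<beta>. theta sc Dop n A \<beta> \<noteq> 0}"
  shows "Pmap sc Dop n xs A = (\<Sum>ks\<in>PiE {..<n - 1} (\<lambda>l. {..degree (xs l)}).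
     sc (\<Prod>i<n - 1. pairing (antipode_t (xs i)) (ks i)) (theta sc Dop n A (map ks [0..<n - 1])))"
proof -
  define m where "m = n - 1"
  define f where "f \<beta> = sc (\<Prod>i<m. pairing (antipode_t (xs i)) (\<beta> ! i)) (theta sc Dop n A \<beta>)" for \<beta>
  define T where "T = {\<beta>. length \<beta> = m \<and> theta sc Dop n A \<beta> \<noteq> 0}"
  define BS where "BS = {j. length j = m \<and> (\<forall>i<m. j ! i \<le> degree (xs i))}"
  have fT: "finite T" unfolding T_def by (rule finite_subset[OF _ fin]) auto
  have fBS: "finite BS"
  proof (rule finite_subset[of _ "{j. set j \<subseteq> {..(\<Sum>i<m. degree (xs i))} \<and> length j = m}"])
    show "BS \<subseteq> {j. set j \<subseteq> {..(\<Sum>i<m. degree (xs i))} \<and> length j = m}"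
    proof (clarify, intro conjI subsetI)
      fix j x assume j: "j \<in> BS" "x \<in> set j"
      then obtain i where i: "i < length j" "j ! i = x" by (auto simp: in_set_conv_nth)
      have "i < m" "j ! i \<le> degree (xs i)" using j(1) i(1) by (auto simp: BS_def)
      moreover have "degree (xs i) \<le> (\<Sum>i<m. degree (xs i))" using \<open>i < m\<close> by (intro member_le_sum) auto
      ultimately show "x \<in> {..(\<Sum>i<m. degree (xs i))}" using i(2) by simp
    qed (auto simp: BS_def)
  qed (simp add: finite_lists_length_eq)
  have "Pmap sc Dop n xs A = (\<Sum>\<beta>\<in>T. f \<beta>)" by (simp add: Pmap_def T_def f_def m_def)
  also have "\<dots> = (\<Sum>\<beta>\<in>T \<union> BS. f \<beta>)"
    by (rule sum.mono_neutral_left) (use fT fBS in \<open>auto simp: T_def BS_def f_def\<close>)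
  also have "\<dots> = (\<Sum>\<beta>\<in>BS. f \<beta>)"
  proof (rule sum.mono_neutral_right)
    show "\<forall>\<beta>\<in>T \<union> BS - BS. f \<beta> = 0"
    proof
      fix \<beta> assume "\<beta> \<in> T \<union> BS - BS"
      then have "length \<beta> = m" "\<not> (\<forall>i<m. \<beta> ! i \<le> degree (xs i))" by (auto simp: T_def BS_def)
      then obtain i where i: "i < m" "degree (xs i) < \<beta> ! i" by (auto simp: not_le)
      then have "pairing (antipode_t (xs i)) (\<beta> ! i) = 0" by (simp add: pairing_antipode coeff_eq_0)
      then have "(\<Prod>i<m. pairing (antipode_t (xs i)) (\<beta> ! i)) = 0" using i(1) by (intro prod_zero) auto
      then show "f \<beta> = 0" by (simp add: f_def)
    qed
  qed (use fT fBS in auto)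
  also have "\<dots> = (\<Sum>ks\<in>PiE {..<m} (\<lambda>l. {..degree (xs l)}). f (map ks [0..<m]))"
    unfolding BS_def by (rule sum_PiE_lists[symmetric])
  also have "\<dots> = (\<Sum>ks\<in>PiE {..<n - 1} (\<lambda>l. {..degree (xs l)}).
     sc (\<Prod>i<n - 1. pairing (antipode_t (xs i)) (ks i)) (theta sc Dop n A (map ks [0..<n - 1])))"
    unfolding m_def f_def by (intro sum.cong refl arg_cong2[where f=sc] prod.cong) auto
  finally show ?thesis .
qed


lemma prod_list_map_upt: "prod_list (map f [0..<m]) = (\<Prod>l<m. f l)"
  by (induct m) (simp_all add: mult.commute)

lemma core:
  assumes la: "length \<alpha> = Suc m"
  shows "mon p (sc (y p) (sc (\<Prod>i<m. pairing (antipode_t (xs i)) (ks i)) (theta sc Dop (Suc m) (single \<alpha> c) (map ks [0..<m]))))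
   \<approx> (\<Sum>js\<in>PiE {..<m} (\<lambda>l. {..ks l}). vsc (\<Prod>l<m. coeff (xs l) (ks l) * of_nat (ks l choose js l))
        (vsc ((-1) ^ (\<Sum>l<m. js l) * y p) (evm (map (\<lambda>i. int (ks i - js i)) [0..<m] @ [p + int (\<Sum>l<m. js l)]) (single \<alpha> c))))"
proof -
  obtain \<alpha>' k where \<alpha>: "\<alpha> = \<alpha>' @ [k]" "length \<alpha>' = m"
    using la by (metis append_butlast_last_id diff_Suc_1 length_butlast list.size(3) nat.distinct(1))
  define K where "K = map ks [0..<m]"
  have lK: "length K = m" by (simp add: K_def)
  define CO where "CO = (\<Prod>l<m. coeff (xs l) (ks l))"
  define g where "g j = (prod_list (map2 (\<lambda>Ki ji. of_nat (Ki choose ji) * (-1) ^ ji) K j) *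
      prod_list (map2 (\<lambda>d a. fw (of_nat d) a) (map2 (-) K j) \<alpha>') * fw (of_int p + of_nat (sum_list j)) k :: 'k)" for j
  define Gs where "Gs = (\<Sum>j\<in>below K. g j)"
  define E0 where "E0 = p + int (sum_list K) - int (sum_list \<alpha>)"
  have R: "(\<Sum>js\<in>PiE {..<m} (\<lambda>l. {..ks l}). vsc (\<Prod>l<m. coeff (xs l) (ks l) * of_nat (ks l choose js l))
        (vsc ((-1) ^ (\<Sum>l<m. js l) * y p) (evm (map (\<lambda>i. int (ks i - js i)) [0..<m] @ [p + int (\<Sum>l<m. js l)]) (single \<alpha> c))))
     = mon E0 (sc (y p * CO * Gs) c)"
  proof -
    have "(\<Sum>js\<in>PiE {..<m} (\<lambda>l. {..ks l}). vsc (\<Prod>l<m. coeff (xs l) (ks l) * of_nat (ks l choose js l))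
        (vsc ((-1) ^ (\<Sum>l<m. js l) * y p) (evm (map (\<lambda>i. int (ks i - js i)) [0..<m] @ [p + int (\<Sum>l<m. js l)]) (single \<alpha> c))))
      = (\<Sum>js\<in>PiE {..<m} (\<lambda>l. {..ks l}). mon E0 (sc (y p * CO * g (map js [0..<m])) c))"
    proof (rule sum.cong[OF refl])
      fix js assume js: "js \<in> PiE {..<m} (\<lambda>l. {..ks l})"
      then have jle: "js l \<le> ks l" if "l < m" for l using that by auto
      define J where "J = (\<Sum>l<m. js l)"
      define PS where "PS = map (\<lambda>i. int (ks i - js i)) [0..<m] @ [p + int J]"
      have lPS: "length \<alpha> = length PS" using la by (simp add: PS_def)
      have sPS: "sum_list PS = p + int (sum_list K)"
      proof -
        have "sum_list PS = (\<Sum>l<m. int (ks l - js l)) + (p + int J)"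
          by (simp add: PS_def sum_list_map_upt)
        also have "(\<Sum>l<m. int (ks l - js l)) = (\<Sum>l<m. int (ks l)) - (\<Sum>l<m. int (js l))"
          using jle by (simp add: of_nat_diff sum_subtractf)
        finally show ?thesis by (simp add: J_def K_def sum_list_map_upt)
      qed
      have mk: "map (\<lambda>i. ks i - js i) [0..<m] = map2 (-) K (map js [0..<m])"
        by (simp add: K_def list_eq_iff_nth_eq)
      have ePS: "evw PS \<alpha> = prod_list (map2 (\<lambda>d a. fw (of_nat d) a) (map2 (-) K (map js [0..<m])) \<alpha>') * fw (of_int p + of_nat J) k"
      proof -
        have "PS = map int (map (\<lambda>i. ks i - js i) [0..<m]) @ [p + int J]" by (simp add: PS_def)
        then have "evw PS \<alpha> = evw (map int (map (\<lambda>i. ks i - js i) [0..<m])) \<alpha>' * evw [p + int J] [k]"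
          using \<alpha> by (simp add: evw_append)
        moreover have e1: "evw [p + int J] [k] = (fw (of_int p + of_nat J) k :: 'k)" by simp
        ultimately show ?thesis unfolding mk evw_int e1 by simp
      qed
      have pC: "prod_list (map2 (\<lambda>Ki ji. of_nat (Ki choose ji) * (-1) ^ ji) K (map js [0..<m]))
          = (\<Prod>l<m. of_nat (ks l choose js l)) * (-1::'k) ^ J"
        by (simp add: K_def prod_list_map2_upt prod.distrib J_def power_sum)
      have sJ: "sum_list (map js [0..<m]) = J" by (simp add: J_def sum_list_map_upt)
      have "evm PS (single \<alpha> c) = mon E0 (sc (evw PS \<alpha>) c)"
        by (simp add: evm_single[OF lPS] sPS E0_def)
      then show "vsc (\<Prod>l<m. coeff (xs l) (ks l) * of_nat (ks l choose js l))
        (vsc ((-1) ^ (\<Sum>l<m. js l) * y p) (evm (map (\<lambda>i. int (ks i - js i)) [0..<m] @ [p + int (\<Sum>l<m. js l)]) (single \<alpha> c)))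
        = mon E0 (sc (y p * CO * g (map js [0..<m])) c)"
        unfolding PS_def[symmetric] J_def[symmetric]
        by (simp add: mon_sc[symmetric] g_def ePS pC sJ CO_def prod.distrib mult_ac)
    qed
    also have "\<dots> = mon E0 (sc (y p * CO * (\<Sum>js\<in>PiE {..<m} (\<lambda>l. {..ks l}). g (map js [0..<m]))) c)"
      by (simp add: mon_sum[symmetric] V.scale_sum_left[symmetric] sum_distrib_left)
    also have "(\<Sum>js\<in>PiE {..<m} (\<lambda>l. {..ks l}). g (map js [0..<m])) = Gs"
      unfolding Gs_def K_def below_map by (rule sum_PiE_lists)
    finally show ?thesis .
  qed
  define r where "r = sum_list (map2 (-) K \<alpha>')"
  have thC_eq: "thC \<alpha> K \<longleftrightarrow> list_all2 (\<le>) \<alpha>' K \<and> r \<le> k"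
    by (simp add: thC_def \<alpha>(1) r_def)
  have Gv: "Gs = (if list_all2 (\<le>) \<alpha>' K \<and> r \<le> k
      then prod_list (map2 (\<lambda>Ki Ai. (-1) ^ Ai * (fact Ki / fact (Ki - Ai))) K \<alpha>') *
           (fact k / fact (k - r)) * fw (of_int p) (k - r) else 0)"
    unfolding Gs_def g_def r_def using G[of \<alpha>' K "of_int p" k] \<alpha>(2) lK by simp
  show ?thesis
  proof (cases "list_all2 (\<le>) \<alpha>' K \<and> r \<le> k")
    case True
    then have cK: "list_all2 (\<le>) \<alpha>' K" "r \<le> k" by auto
    define Q where "Q = (prod_list (map fact (map2 (-) K \<alpha>')) :: 'k)"
    define PF where "PF = (prod_list (map (\<lambda>Ki. fact Ki * (-1) ^ Ki) K) :: 'k)"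
    define th where "th = (of_nat (k choose r) * (-1) ^ r * fact r / Q :: 'k)"
    have theq: "theta sc Dop (Suc m) (single \<alpha> c) K = sc th ((Dop ^^ (k - r)) c)"
    proof -
      have tc: "thC \<alpha> K" using True thC_eq by simp
      have "theta sc Dop (Suc m) (single \<alpha> c) K = thT \<alpha> K c" using la lK tc by (simp add: theta_single)
      also have "\<dots> = sc th ((Dop ^^ (k - r)) c)"
        by (simp add: thT_def Let_def \<alpha>(1) th_def Q_def r_def)
      finally show ?thesis .
    qed
    have W: "(\<Prod>i<m. pairing (antipode_t (xs i)) (ks i)) = PF * CO"
      by (simp add: pairing_antipode PF_def CO_def K_def prod_list_map_upt prod.distrib mult_ac)
    have sp: "PF * ((-1) ^ r / Q) = prod_list (map2 (\<lambda>Ki Ai. (-1) ^ Ai * (fact Ki / fact (Ki - Ai))) K \<alpha>')"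
      unfolding PF_def Q_def r_def by (rule sign_prod[OF cK(1)])
    have bf: "of_nat (k choose r) * fact r = (fact k / fact (k - r) :: 'k)"
      using cK(2) by (simp add: binomial_fact field_simps)
    have coef: "fw (of_int p) (k - r) * (y p * (PF * CO * th)) = y p * CO * Gs"
    proof -
      have "PF * th = (of_nat (k choose r) * fact r) * (PF * ((-1) ^ r / Q))"
        by (simp add: th_def field_simps)
      also have "\<dots> = (fact k / fact (k - r)) * prod_list (map2 (\<lambda>Ki Ai. (-1) ^ Ai * (fact Ki / fact (Ki - Ai))) K \<alpha>')"
        by (simp only: bf sp)
      finally have "PF * th = \<dots>" .
      then show ?thesis using True by (simp add: Gv mult_ac)
    qed
    have ex: "p - int (k - r) = E0"
    proof -
      have "sum_list K = sum_list \<alpha>' + r" using sum_list_map2_le[OF cK(1)] by (simp add: r_def)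
      then show ?thesis using cK(2) by (simp add: E0_def \<alpha>(1) of_nat_diff)
    qed
    have "mon p (sc (y p) (sc (\<Prod>i<m. pairing (antipode_t (xs i)) (ks i)) (theta sc Dop (Suc m) (single \<alpha> c) (map ks [0..<m]))))
        = mon p ((Dop ^^ (k - r)) (sc (y p * (PF * CO * th)) c))"
      unfolding K_def[symmetric] theq W by (simp add: Dpow_sc)
    also have "\<dots> \<approx> mon (p - int (k - r)) (sc (fw (of_int p) (k - r)) (sc (y p * (PF * CO * th)) c))"
      by (rule mon_Dpow)
    also have "\<dots> = mon E0 (sc (y p * CO * Gs) c)"
      by (simp only: ex V.scale_scale coef)
    finally show ?thesis unfolding R .
  next
    case False
    then have "\<not> thC \<alpha> K" using thC_eq by simp
    then have "theta sc Dop (Suc m) (single \<alpha> c) K = 0"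
      by (simp add: theta_single)
    moreover have "Gs = 0" unfolding Gv using False by (simp only: if_False)
    ultimately show ?thesis unfolding R K_def[symmetric] by simp
  qed
qed

end

context CA begin

lemma coeff_elem_sum:
  assumes "finite Y" "{p. y p \<noteq> 0} \<subseteq> Y"
  shows "coeff_elem sc b y = (\<Sum>p\<in>Y. mon p (sc (y p) b))"
proof
  fix q
  have "(\<Sum>p\<in>Y. mon p (sc (y p) b)) q = (\<Sum>p\<in>Y. if q = p then sc (y p) b else 0)"
    by (simp add: sum_fun_apply mon_def)
  also have "\<dots> = (if q \<in> Y then sc (y q) b else 0)" using assms(1) by (simp add: sum.delta)
  also have "\<dots> = sc (y q) b" using assms(2) by auto
  finally show "coeff_elem sc b y q = (\<Sum>p\<in>Y. mon p (sc (y p) b)) q" by (simp add: coeff_elem_def)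
qed

lemma A_main:
  assumes fA: "fsn (Suc m) A" and fy: "finite {p. y p \<noteq> 0}"
  shows "Pymap sc Dop (Suc m) xs y A \<approx>
   (\<Sum>ks\<in>PiE {..<m} (\<lambda>l. {..degree (xs l)}). \<Sum>js\<in>PiE {..<m} (\<lambda>l. {..ks l}).
      vsc (\<Prod>l<m. coeff (xs l) (ks l) * of_nat (ks l choose js l))
        (\<Sum>p\<in>{p. y p \<noteq> 0}. vsc ((-1) ^ (\<Sum>l<m. js l) * y p)
           (evm (map (\<lambda>i. int (ks i - js i)) [0..<m] @ [p + int (\<Sum>l<m. js l)]) A)))"
proof -
  define Y where "Y = {p. y p \<noteq> 0}"
  define SA where "SA = {\<alpha>. A \<alpha> \<noteq> 0}"
  define KS where "KS = PiE {..<m} (\<lambda>l. {..degree (xs l)})"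
  define JS where "JS ks = PiE {..<m} (\<lambda>l. {..ks l})" for ks :: "nat \<Rightarrow> nat"
  define W where "W ks = (\<Prod>i<m. pairing (antipode_t (xs i)) (ks i))" for ks
  define CC where "CC ks js = (\<Prod>l<m. coeff (xs l) (ks l) * of_nat (ks l choose js l))" for ks js
  define PS where "PS ks js p = map (\<lambda>i. int (ks i - js i)) [0..<m] @ [p + int (\<Sum>l<m. js l)]" for ks js :: "nat \<Rightarrow> nat" and p
  define sg where "sg js p = (-1) ^ (\<Sum>l<m. js l) * y p" for js :: "nat \<Rightarrow> nat" and p
  have fSA: "finite SA" using fA by (simp add: fsn_def SA_def)
  have lSA: "length \<alpha> = Suc m" if "\<alpha> \<in> SA" for \<alpha> using fA that by (auto simp: fsn_def SA_def)
  have "Pymap sc Dop (Suc m) xs y A = (\<Sum>p\<in>Y. mon p (sc (y p) (Pmap sc Dop (Suc m) xs A)))"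
    unfolding Pymap_def Y_def using fy by (rule coeff_elem_sum) simp
  also have "\<dots> = (\<Sum>p\<in>Y. \<Sum>ks\<in>KS. \<Sum>\<alpha>\<in>SA.
      mon p (sc (y p) (sc (W ks) (theta sc Dop (Suc m) (single \<alpha> (A \<alpha>)) (map ks [0..<m])))))"
  proof -
    have "Pmap sc Dop (Suc m) xs A = (\<Sum>ks\<in>KS. \<Sum>\<alpha>\<in>SA. sc (W ks) (theta sc Dop (Suc m) (single \<alpha> (A \<alpha>)) (map ks [0..<m])))"
      using Pmap_formula[OF theta_fin[OF fA], of xs]
      by (simp add: KS_def W_def SA_def theta_decomp[OF fSA[unfolded SA_def]] V.scale_sum_right)
    then show ?thesis by (simp add: V.scale_sum_right mon_sum)
  qed
  also have "\<dots> \<approx> (\<Sum>p\<in>Y. \<Sum>ks\<in>KS. \<Sum>\<alpha>\<in>SA. \<Sum>js\<in>JS ks.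
      vsc (CC ks js) (vsc (sg js p) (evm (PS ks js p) (single \<alpha> (A \<alpha>)))))"
    unfolding W_def CC_def sg_def PS_def JS_def
    by (intro ceq_sum core lSA)
  also have "\<dots> = (\<Sum>ks\<in>KS. \<Sum>js\<in>JS ks. vsc (CC ks js)
      (\<Sum>p\<in>Y. vsc (sg js p) (\<Sum>\<alpha>\<in>SA. evm (PS ks js p) (single \<alpha> (A \<alpha>)))))"
  proof -
    have "(\<Sum>p\<in>Y. \<Sum>ks\<in>KS. \<Sum>\<alpha>\<in>SA. \<Sum>js\<in>JS ks. vsc (CC ks js) (vsc (sg js p) (evm (PS ks js p) (single \<alpha> (A \<alpha>)))))
      = (\<Sum>ks\<in>KS. \<Sum>p\<in>Y. \<Sum>\<alpha>\<in>SA. \<Sum>js\<in>JS ks. vsc (CC ks js) (vsc (sg js p) (evm (PS ks js p) (single \<alpha> (A \<alpha>)))))"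
      by (rule sum.swap)
    also have "\<dots> = (\<Sum>ks\<in>KS. \<Sum>p\<in>Y. \<Sum>js\<in>JS ks. \<Sum>\<alpha>\<in>SA. vsc (CC ks js) (vsc (sg js p) (evm (PS ks js p) (single \<alpha> (A \<alpha>)))))"
      by (intro sum.cong refl sum.swap)
    also have "\<dots> = (\<Sum>ks\<in>KS. \<Sum>js\<in>JS ks. \<Sum>p\<in>Y. \<Sum>\<alpha>\<in>SA. vsc (CC ks js) (vsc (sg js p) (evm (PS ks js p) (single \<alpha> (A \<alpha>)))))"
      by (intro sum.cong refl sum.swap)
    also have "\<dots> = (\<Sum>ks\<in>KS. \<Sum>js\<in>JS ks. vsc (CC ks js)
      (\<Sum>p\<in>Y. vsc (sg js p) (\<Sum>\<alpha>\<in>SA. evm (PS ks js p) (single \<alpha> (A \<alpha>)))))"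
      by (simp only: vsc_sum)
    finally show ?thesis .
  qed
  also have "\<dots> = (\<Sum>ks\<in>KS. \<Sum>js\<in>JS ks. vsc (CC ks js) (\<Sum>p\<in>Y. vsc (sg js p) (evm (PS ks js p) A)))"
  proof -
    have "evm (PS ks js p) A = (\<Sum>\<alpha>\<in>SA. evm (PS ks js p) (single \<alpha> (A \<alpha>)))" for ks js p
      unfolding SA_def by (rule evm_decomp) (use fA in \<open>simp add: PS_def\<close>)
    then show ?thesis by simp
  qed
  finally show ?thesis by (simp add: KS_def JS_def CC_def sg_def PS_def Y_def)
qed

end

context CA begin

lemma coeff_elem_lmono: "coeff_elem sc b (lmono e) = mon e b"
  by (auto simp: fun_eq_iff coeff_elem_def lmono_def mon_def)

lemma coeff_elem_yanti:
  assumes fy: "finite {p. y p \<noteq> 0}"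
  shows "coeff_elem sc b (y_antipode y J) = (\<Sum>p\<in>{p. y p \<noteq> 0}. vsc ((-1) ^ J * y p) (mon (p + int J) b))"
proof
  fix q
  have "(\<Sum>p\<in>{p. y p \<noteq> 0}. vsc ((-1) ^ J * y p) (mon (p + int J) b)) q
      = (\<Sum>p\<in>{p. y p \<noteq> 0}. if q - int J = p then sc ((-1) ^ J * y p) b else 0)"
    unfolding sum_fun_apply by (rule sum.cong) (auto simp: mon_def)
  also have "\<dots> = (if q - int J \<in> {p. y p \<noteq> 0} then sc ((-1) ^ J * y (q - int J)) b else 0)"
    using fy by (rule sum.delta')
  also have "\<dots> = sc ((-1) ^ J * y (q - int J)) b" by auto
  finally show "coeff_elem sc b (y_antipode y J) q = (\<Sum>p\<in>{p. y p \<noteq> 0}. vsc ((-1) ^ J * y p) (mon (p + int J) b)) q"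
    by (simp add: coeff_elem_def y_antipode_def)
qed

theorem main:
  assumes lt: "leaves tr = n" and sp: "\<sigma> permutes {..<n}" and fy: "finite {p. y p \<noteq> 0}"
  shows "coeff_eq sc Dop
     (Pymap sc Dop n xs y (perm_tens \<sigma> (tstar sc pr tr (map (\<lambda>i. a (\<sigma> i)) [0..<n]))))
     (\<lambda>p. \<Sum>ks\<in>PiE {..<n - 1} (\<lambda>l. {..degree (xs l)}). \<Sum>js\<in>PiE {..<n - 1} (\<lambda>l. {..ks l}).
        sc (\<Prod>l<n - 1. coeff (xs l) (ks l) * of_nat (ks l choose js l))
           (tmon sc pr tr
              (map (\<lambda>i. coeff_elem sc (a (\<sigma> i))
                     (if \<sigma> i \<noteq> n - 1 then lmono (int (ks (\<sigma> i) - js (\<sigma> i)))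
                      else y_antipode y (\<Sum>l<n - 1. js l)))
                 [0..<n]) p))"
proof -
  obtain m where n: "n = Suc m" using leaves_pos[of tr] lt by (metis gr0_implies_Suc)
  define bs where "bs = map (\<lambda>i. a (\<sigma> i)) [0..<n]"
  define T where "T = tstar sc pr tr bs"
  define Y where "Y = {p. y p \<noteq> 0}"
  define KS where "KS = PiE {..<m} (\<lambda>l. {..degree (xs l)})"
  define JS where "JS ks = PiE {..<m} (\<lambda>l. {..ks l})" for ks :: "nat \<Rightarrow> nat"
  define CC where "CC ks js = (\<Prod>l<m. coeff (xs l) (ks l) * of_nat (ks l choose js l))" for ks js
  define PS where "PS ks js p = map (\<lambda>i. int (ks i - js i)) [0..<m] @ [p + int (\<Sum>l<m. js l)]" for ks js :: "nat \<Rightarrow> nat" and p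
  define sg where "sg js p = (-1) ^ (\<Sum>l<m. js l) * y p" for js :: "nat \<Rightarrow> nat" and p
  define us where "us ks js = map (\<lambda>i. coeff_elem sc (a (\<sigma> i))
                     (if \<sigma> i \<noteq> m then lmono (int (ks (\<sigma> i) - js (\<sigma> i)))
                      else y_antipode y (\<Sum>l<m. js l))) [0..<n]" for ks js :: "nat \<Rightarrow> nat"
  have lbs: "length bs = leaves tr" using lt by (simp add: bs_def)
  have fT: "fsn n T" unfolding T_def using tstar_fsn[OF lbs] lt by simp
  have fP: "fsn n (perm_tens \<sigma> T)" by (rule fsn_perm[OF sp fT])
  have lPS: "length (PS ks js p) = n" for ks js p by (simp add: PS_def n)
  have L: "Pymap sc Dop n xs y (perm_tens \<sigma> T) \<approx>
     (\<Sum>ks\<in>KS. \<Sum>js\<in>JS ks. vsc (CC ks js) (\<Sum>p\<in>Y. vsc (sg js p) (evm (PS ks js p) (perm_tens \<sigma> T))))"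
    using A_main[of m "perm_tens \<sigma> T" y xs] fP fy unfolding n
    by (simp add: KS_def JS_def CC_def sg_def PS_def Y_def)
  have E: "evm (PS ks js p) (perm_tens \<sigma> T) \<approx> tmon sc pr tr (map2 mon (permlist \<sigma> (PS ks js p)) bs)" for ks js p
  proof -
    have "evm (PS ks js p) (perm_tens \<sigma> T) = evm (permlist \<sigma> (PS ks js p)) T"
      using sp fT lPS by (intro evm_perm) simp_all
    also have "\<dots> \<approx> tmon sc pr tr (map2 mon (permlist \<sigma> (PS ks js p)) bs)"
      unfolding T_def using lbs lPS lt by (intro main_E) simp_all
    finally show ?thesis .
  qed
  have i0: "inv \<sigma> m < n" "\<sigma> (inv \<sigma> m) = m"
  proof -
    have "inv \<sigma> permutes {..<n}" using sp by (rule permutes_inv)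
    then show "inv \<sigma> m < n" using permutes_in_image n by fastforce
    show "\<sigma> (inv \<sigma> m) = m" using sp by (rule permutes_inverses(1))
  qed
  have sl: "\<sigma> i < n" if "i < n" for i using sp that permutes_in_image by fastforce
  have sne: "\<sigma> i \<noteq> m" if "i < n" "i \<noteq> inv \<sigma> m" for i
    using that sp by (metis permutes_inverses(2))
  have R: "tmon sc pr tr (us ks js) = (\<Sum>p\<in>Y. vsc (sg js p) (tmon sc pr tr (map2 mon (permlist \<sigma> (PS ks js p)) bs)))" for ks js
  proof -
    define J where "J = (\<Sum>l<m. js l)"
    define u0 where "u0 = map (\<lambda>i. mon (int (ks (\<sigma> i) - js (\<sigma> i))) (a (\<sigma> i))) [0..<n]"
    define v where "v p = mon (p + int J) (a m)" for p
    have us_eq: "us ks js = u0[inv \<sigma> m := (\<Sum>p\<in>Y. vsc (sg js p) (v p))]"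
    proof (rule nth_equalityI)
      show "length (us ks js) = length (u0[inv \<sigma> m := (\<Sum>p\<in>Y. vsc (sg js p) (v p))])"
        by (simp add: us_def u0_def)
    next
      fix i assume "i < length (us ks js)"
      then have i: "i < n" by (simp add: us_def)
      show "us ks js ! i = u0[inv \<sigma> m := (\<Sum>p\<in>Y. vsc (sg js p) (v p))] ! i"
      proof (cases "i = inv \<sigma> m")
        case True
        then show ?thesis using i i0 fy
          by (simp add: us_def u0_def coeff_elem_yanti v_def sg_def J_def Y_def)
      next
        case False
        then show ?thesis using i sne[OF i False]
          by (simp add: us_def u0_def coeff_elem_lmono)
      qed
    qed
    have u0_upd: "u0[inv \<sigma> m := v p] = map2 mon (permlist \<sigma> (PS ks js p)) bs" for p
    proof (rule nth_equalityI)
      show "length (u0[inv \<sigma> m := v p]) = length (map2 mon (permlist \<sigma> (PS ks js p)) bs)"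
        using lPS by (simp add: u0_def bs_def)
    next
      fix i assume "i < length (u0[inv \<sigma> m := v p])"
      then have i: "i < n" by (simp add: u0_def)
      have pl: "permlist \<sigma> (PS ks js p) ! i = PS ks js p ! \<sigma> i" using i lPS by (simp add: permlist_nth)
      show "u0[inv \<sigma> m := v p] ! i = map2 mon (permlist \<sigma> (PS ks js p)) bs ! i"
      proof (cases "i = inv \<sigma> m")
        case True
        then show ?thesis using i i0 lPS pl
          by (simp add: u0_def v_def bs_def PS_def nth_append J_def)
      next
        case False
        have "\<sigma> i < m" using sl[OF i] sne[OF i False] n by simp
        then show ?thesis using i False lPS pl
          by (simp add: u0_def bs_def PS_def nth_append)
      qed
    qed
    have "tmon sc pr tr (us ks js) = (\<Sum>p\<in>Y. vsc (sg js p) (tmon sc pr tr (u0[inv \<sigma> m := v p])))"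
      unfolding us_eq using lt i0 fy
      by (intro tmon_slot) (auto simp: u0_def v_def Y_def)
    then show ?thesis by (simp only: u0_upd)
  qed
  have "Pymap sc Dop n xs y (perm_tens \<sigma> T) \<approx>
     (\<Sum>ks\<in>KS. \<Sum>js\<in>JS ks. vsc (CC ks js) (\<Sum>p\<in>Y. vsc (sg js p) (tmon sc pr tr (map2 mon (permlist \<sigma> (PS ks js p)) bs))))"
    using L by (rule ceq_trans) (intro ceq_sum ceq_vsc E)
  also have "\<dots> = (\<Sum>ks\<in>KS. \<Sum>js\<in>JS ks. vsc (CC ks js) (tmon sc pr tr (us ks js)))"
    by (simp only: R)
  also have "\<dots> = (\<lambda>p. \<Sum>ks\<in>PiE {..<n - 1} (\<lambda>l. {..degree (xs l)}). \<Sum>js\<in>PiE {..<n - 1} (\<lambda>l. {..ks l}).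
        sc (\<Prod>l<n - 1. coeff (xs l) (ks l) * of_nat (ks l choose js l))
           (tmon sc pr tr
              (map (\<lambda>i. coeff_elem sc (a (\<sigma> i))
                     (if \<sigma> i \<noteq> n - 1 then lmono (int (ks (\<sigma> i) - js (\<sigma> i)))
                      else y_antipode y (\<Sum>l<n - 1. js l)))
                 [0..<n]) p))"
    unfolding n diff_Suc_1 by (simp add: fun_eq_iff sum_fun_apply KS_def JS_def CC_def us_def n del: upt_Suc)
  finally show ?thesis unfolding ceq_def T_def bs_def .
qed

end

theorem lemma3p2:
  fixes sc :: "'k::field_char_0 \<Rightarrow> 'c::ab_group_add \<Rightarrow> 'c"
    and Dop :: "'c \<Rightarrow> 'c" and pr :: "nat \<Rightarrow> 'c \<Rightarrow> 'c \<Rightarrow> 'c"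
    and tr :: bracketing and n :: nat and \<sigma> :: "nat \<Rightarrow> nat"
    and xs :: "nat \<Rightarrow> 'k poly" and y :: "int \<Rightarrow> 'k" and a :: "nat \<Rightarrow> 'c"
  assumes "conformal_algebra sc Dop pr"
    and "leaves tr = n"
    and "\<sigma> permutes {..<n}"
    and "finite {p. y p \<noteq> 0}"
  shows "coeff_eq sc Dop
     (Pymap sc Dop n xs y (perm_tens \<sigma> (tstar sc pr tr (map (\<lambda>i. a (\<sigma> i)) [0..<n]))))
     (\<lambda>p. \<Sum>ks\<in>PiE {..<n - 1} (\<lambda>l. {..degree (xs l)}). \<Sum>js\<in>PiE {..<n - 1} (\<lambda>l. {..ks l}).
        sc (\<Prod>l<n - 1. coeff (xs l) (ks l) * of_nat (ks l choose js l))
           (tmon sc pr tr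
              (map (\<lambda>i. coeff_elem sc (a (\<sigma> i))
                     (if \<sigma> i \<noteq> n - 1 then lmono (int (ks (\<sigma> i) - js (\<sigma> i)))
                      else y_antipode y (\<Sum>l<n - 1. js l)))
                 [0..<n]) p))"
  using CA.main[OF CA.intro[OF assms(1)] assms(2) assms(3) assms(4)] .

end
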